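(* Let $\Psi_{\text{pt}}$ and $\Psi_{\text{tg}}$ be two $L$-layer Kolmogorov--Arnold networks (KANs) with the same widths $n_1,\dots,n_{L+1}$ and the same basis functions $b_1,\dots,b_{n_d}$, with parameter tensors $\{\mathcal{A}_{\ell,\text{pt}}\}_{\ell\in[L]}$ and $\{\mathcal{A}_{\ell,\text{tg}}\}_{\ell\in[L]}$ respectively, $\mathcal{A}_{\ell,\cdot}\in\mathbb{R}^{n_\ell\times n_{\ell+1}\times n_d}$. Assume that each basis function $b_k:\mathbb{R}\to\mathbb{R}$ is smooth, satisfies $|b_k(z)|\le B$ for all $z$, and is Lipschitz with constant $L_b>0$, and that $\|\mathcal{A}_{\ell,\text{tg}}\|_F\le M$ and $\|\mathcal{A}_{\ell,\text{pt}}\|_F\le M$ for all $\ell\in[L]$, with $B,M>0$. Fix integers $1\le r_{\ell,1}\le n_\ell$, $1\le r_{\ell,2}\le n_{\ell+1}$, $1\le r_{\ell,3}\le n_d$ for each $\ell\in[L]$. Then there exist core tensors $\mathcal{G}_\ell\in\mathbb{R}^{r_{\ell,1}\times r_{\ell,2}\times r_{\ell,3}}$ and matrices $\bm{U}_\ell^{(1)}\in\mathbb{R}^{n_\ell\times r_{\ell,1}}$, $\bm{U}_\ell^{(2)}\in\mathbb{R}^{n_{\ell+1}\times r_{\ell,2}}$, $\bm{U}_\ell^{(3)}\in\mathbb{R}^{n_d\times r_{\ell,3}}$, $\ell\in[L]$, such that the KAN $\Psi_{\text{ft}}$ with parameter tensors $$\mathcal{A}_{\ell,\text{ft}}=\mathcal{A}_{\ell,\text{pt}}+\mathcal{G}_\ell\times_1\bm{U}_\ell^{(1)}\times_2\bm{U}_\ell^{(2)}\times_3\bm{U}_\ell^{(3)},\quad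 \ell\in[L],$$ satisfies, for every $\bm{x}\in\mathbb{R}^{n_1}$, $$\|\Psi_{\text{ft}}(\bm{x})-\Psi_{\text{tg}}(\bm{x})\|_2\le\sum_{\ell=1}^{L}C_\ell\Big(\sum_{r=r_{\ell,1}+1}^{n_\ell}\sigma_r(\bm{E}_\ell^{(1)})^2+\sum_{r=r_{\ell,2}+1}^{n_{\ell+1}}\sigma_r(\bm{E}_\ell^{(2)})^2+\sum_{r=r_{\ell,3}+1}^{n_d}\sigma_r(\bm{E}_\ell^{(3)})^2\Big)^{1/2},$$ where $C_\ell:=(M L_b\sqrt{n_d})^{L-\ell}\cdot B\sqrt{n_\ell n_d}$.
   Context: A KAN of depth $L$ with widths $n_1,\dots,n_{L+1}$, basis functions $b_1,\dots,b_{n_d}:\mathbb{R}\to\mathbb{R}$ and parameter tensors $\mathcal{A}_\ell=(a_{\ell,p,q,k})\in\mathbb{R}^{n_\ell\times n_{\ell+1}\times n_d}$ is the map $\Psi:\mathbb{R}^{n_1}\to\mathbb{R}^{n_{L+1}}$, $\Psi(\bm{x})=\bm{z}_{L+1}$, where $\bm{z}_1=\bm{x}$ and $z_{\ell+1,q}=\sum_{p=1}^{n_\ell}\sum_{k=1}^{n_d}a_{\ell,p,q,k}\,b_k(z_{\ell,p})$ for $q\in[n_{\ell+1}]$, $\ell\in[L]$. The mode products are defined by $(\mathcal{G}\times_1\bm{U}^{(1)}\times_2\bm{U}^{(2)}\times_3\bm{U}^{(3)})_{i,j,k}=\sum_{a,b,c}g_{a,b,c}U^{(1)}_{i,a}U^{(2)}_{j,b}U^{(3)}_{k,c}$.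 The error tensor is $\mathcal{E}_\ell=\mathcal{A}_{\ell,\text{tg}}-\mathcal{A}_{\ell,\text{pt}}$, and $\bm{E}_\ell^{(1)}\in\mathbb{R}^{n_\ell\times n_{\ell+1}n_d}$, $\bm{E}_\ell^{(2)}\in\mathbb{R}^{n_{\ell+1}\times n_\ell n_d}$, $\bm{E}_\ell^{(3)}\in\mathbb{R}^{n_d\times n_\ell n_{\ell+1}}$ are its mode-$i$ unfoldings (the matrix whose columns are the mode-$i$ fibers of $\mathcal{E}_\ell$). $\sigma_r(\cdot)$ denotes the $r$-th largest singular value (taken to be $0$ if $r$ exceeds the number of singular values). *)

theory Defs
  imports "HOL-Analysis.Lipschitz" "Jordan_Normal_Form.Char_Poly" "HOL-Library.Multiset"
begin

definition smooth_fun :: "(real \<Rightarrow> real) \<Rightarrow> bool" where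
  "smooth_fun f \<longleftrightarrow> (\<forall>k x. (deriv ^^ k) f differentiable (at x))"

text \<open>Singular values of a real matrix A: square roots of the eigenvalues (with multiplicity)
  of A * A^T, sorted decreasingly; sigma_r is 1-based and 0 beyond the number of values.\<close>
definition sing_vals :: "real mat \<Rightarrow> real list" where
  "sing_vals A = map sqrt (rev (sorted_list_of_multiset (proots (char_poly (A * transpose_mat A)))))"

definition sigma :: "nat \<Rightarrow> real mat \<Rightarrow> real" where
  "sigma r A = (if 1 \<le> r \<and> r \<le> length (sing_vals A) then sing_vals A ! (r - 1) else 0)"

text \<open>Tensors: 3-way arrays as functions with 0-based indices; layers are 1-based.
  n :: nat \<Rightarrow> nat gives widths n 1, ..., n (L+1); nd is the number of basis functions,
  b k for k < nd are the basis functions.\<close>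

definition kan_layer :: "(nat \<Rightarrow> real \<Rightarrow> real) \<Rightarrow> nat \<Rightarrow> nat \<Rightarrow> (nat \<Rightarrow> nat \<Rightarrow> nat \<Rightarrow> real)
    \<Rightarrow> (nat \<Rightarrow> real) \<Rightarrow> (nat \<Rightarrow> real)" where
  "kan_layer b nd nl Al z = (\<lambda>q. \<Sum>p<nl. \<Sum>k<nd. Al p q k * b k (z p))"

text \<open>kan_z b nd n A x j is z_{j+1}.\<close>
primrec kan_z :: "(nat \<Rightarrow> real \<Rightarrow> real) \<Rightarrow> nat \<Rightarrow> (nat \<Rightarrow> nat) \<Rightarrow> (nat \<Rightarrow> nat \<Rightarrow> nat \<Rightarrow> nat \<Rightarrow> real)
    \<Rightarrow> (nat \<Rightarrow> real) \<Rightarrow> nat \<Rightarrow> (nat \<Rightarrow> real)" where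
  "kan_z b nd n A x 0 = x"
| "kan_z b nd n A x (Suc j) = kan_layer b nd (n (Suc j)) (A (Suc j)) (kan_z b nd n A x j)"

definition kan :: "nat \<Rightarrow> (nat \<Rightarrow> real \<Rightarrow> real) \<Rightarrow> nat \<Rightarrow> (nat \<Rightarrow> nat) \<Rightarrow> (nat \<Rightarrow> nat \<Rightarrow> nat \<Rightarrow> nat \<Rightarrow> real)
    \<Rightarrow> (nat \<Rightarrow> real) \<Rightarrow> (nat \<Rightarrow> real)" where
  "kan L b nd n A x = kan_z b nd n A x L"

definition vnorm2 :: "nat \<Rightarrow> (nat \<Rightarrow> real) \<Rightarrow> real" where
  "vnorm2 m v = sqrt (\<Sum>i<m. (v i)\<^sup>2)"

definition frob3 :: "nat \<Rightarrow> nat \<Rightarrow> nat \<Rightarrow> (nat \<Rightarrow> nat \<Rightarrow> nat \<Rightarrow> real) \<Rightarrow> real" where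
  "frob3 d1 d2 d3 T = sqrt (\<Sum>i<d1. \<Sum>j<d2. \<Sum>k<d3. (T i j k)\<^sup>2)"

definition tucker :: "nat \<Rightarrow> nat \<Rightarrow> nat \<Rightarrow> (nat \<Rightarrow> nat \<Rightarrow> nat \<Rightarrow> real)
    \<Rightarrow> (nat \<Rightarrow> nat \<Rightarrow> real) \<Rightarrow> (nat \<Rightarrow> nat \<Rightarrow> real) \<Rightarrow> (nat \<Rightarrow> nat \<Rightarrow> real)
    \<Rightarrow> (nat \<Rightarrow> nat \<Rightarrow> nat \<Rightarrow> real)" where
  "tucker r1 r2 r3 G U1 U2 U3 = (\<lambda>i j k. \<Sum>a<r1. \<Sum>b<r2. \<Sum>c<r3. G a b c * U1 i a * U2 j b * U3 k c)"

definition unfold1 :: "nat \<Rightarrow> nat \<Rightarrow> nat \<Rightarrow> (nat \<Rightarrow> nat \<Rightarrow> nat \<Rightarrow> real) \<Rightarrow> real mat" where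
  "unfold1 d1 d2 d3 T = mat d1 (d2 * d3) (\<lambda>(i, c). T i (c div d3) (c mod d3))"
definition unfold2 :: "nat \<Rightarrow> nat \<Rightarrow> nat \<Rightarrow> (nat \<Rightarrow> nat \<Rightarrow> nat \<Rightarrow> real) \<Rightarrow> real mat" where
  "unfold2 d1 d2 d3 T = mat d2 (d1 * d3) (\<lambda>(j, c). T (c div d3) j (c mod d3))"
definition unfold3 :: "nat \<Rightarrow> nat \<Rightarrow> nat \<Rightarrow> (nat \<Rightarrow> nat \<Rightarrow> nat \<Rightarrow> real) \<Rightarrow> real mat" where
  "unfold3 d1 d2 d3 T = mat d3 (d1 * d2) (\<lambda>(k, c). T (c div d2) (c mod d2) k)"

end

theory Submission
  imports Defs "Jordan_Normal_Form.Schur_Decomposition" "HOL-Library.Function_Algebras"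
    "HOL-Analysis.L2_Norm" "HOL-Analysis.Convex"
begin

lemma real_cscalar: "(v::real vec) \<bullet>c w = v \<bullet> w"
proof -
  have "conjugate w = w" by (rule eq_vecI) auto
  then show ?thesis by simp
qed

lemma real_schur:
  fixes A :: "real mat"
  assumes "A \<in> carrier_mat n n" "char_poly A = (\<Prod>e\<leftarrow>es. [:-e,1:])"
  shows "\<exists>P B. P \<in> carrier_mat n n \<and> B \<in> carrier_mat n n \<and> transpose_mat P * P = 1\<^sub>m n
     \<and> P * transpose_mat P = 1\<^sub>m n \<and> upper_triangular B \<and> diag_mat B = es
     \<and> A = P * B * transpose_mat P"
  using assms
proof (induct es arbitrary: n A)
  case Nil
  from degree_monic_char_poly[OF Nil(1)] Nil(2) have n0: "n = 0" by simp
  show ?case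
    by (rule exI[of _ "1\<^sub>m 0"], rule exI[of _ A], insert Nil(1) n0,
        auto simp: upper_triangular_def diag_mat_def)
next
  case (Cons e es n A)
  note A = Cons(2)
  have cp: "char_poly A = [: -e, 1 :] * (\<Prod>e \<leftarrow> es. [:- e, 1:])" using Cons(3) by simp
  have mon: "monic (\<Prod>e\<leftarrow> es. [:- e, 1:])" by (rule monic_prod_list, auto)
  have deg: "degree (char_poly A) = Suc (degree (\<Prod>e\<leftarrow> es. [:- e, 1:]))" unfolding cp
    by (subst degree_mult_eq, insert mon, auto)
  with degree_monic_char_poly[OF A] have "n \<noteq> 0" by auto
  then obtain m where nm: "n = Suc m" by (cases n) auto
  have e: "eigenvalue A e" unfolding eigenvalue_root_char_poly[OF A] cp by simp
  define v where "v = find_eigenvector A e"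
  from find_eigenvector[OF A e] have ev: "eigenvector A v e" unfolding v_def .
  from this[unfolded eigenvector_def] A
  have v[simp]: "v \<in> carrier_vec n" and v0: "v \<noteq> 0\<^sub>v n" and Av: "A *\<^sub>v v = e \<cdot>\<^sub>v v" by auto
  interpret cof_vec_space n "TYPE(real)" .
  define b where "b = basis_completion v"
  from basis_completion[OF v v0, folded b_def]
  have dist_b: "distinct b" and indep: "\<not> lin_dep (set b)" and bc: "set b \<subseteq> carrier_vec n"
    and hdb: "hd b = v" and len_b: "length b = n" by auto
  from hdb len_b nm obtain vs where bv: "b = v # vs" by (cases b, auto)
  define ws where "ws = gram_schmidt n b"
  from gram_schmidt_result[OF bc dist_b indep refl, folded ws_def]
  have ws: "set ws \<subseteq> carrier_vec n" "corthogonal ws" "length ws = n" by (auto simp: len_b)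
  from gram_schmidt_hd[OF v, of vs, folded bv] have hdws: "hd ws = v" unfolding ws_def .
  have wsc: "\<And>i. i < n \<Longrightarrow> ws ! i \<in> carrier_vec n" using ws by auto
  have wsorth: "\<And>i j. i < n \<Longrightarrow> j < n \<Longrightarrow> ws ! i \<bullet> ws ! j = 0 \<longleftrightarrow> i \<noteq> j"
    using corthogonalD[OF ws(2)] ws(3) by (simp add: real_cscalar)
  have wspos: "ws ! i \<bullet> ws ! i > 0" if i: "i < n" for i
  proof -
    have "ws ! i \<bullet> ws ! i \<noteq> 0" using wsorth[OF i i] by simp
    moreover have "ws ! i \<bullet> ws ! i \<ge> 0"
      unfolding scalar_prod_def by (auto intro: sum_nonneg)
    ultimately show ?thesis by simp
  qed
  define us where "us = map (\<lambda>w. (1 / sqrt (w \<bullet> w)) \<cdot>\<^sub>v w) ws"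
  have lus: "length us = n" using ws(3) us_def by simp
  have usc: "\<And>i. i < n \<Longrightarrow> us ! i \<in> carrier_vec n" using wsc ws(3) us_def by simp
  have usorth: "us ! i \<bullet> us ! j = (if i = j then 1 else 0)" if i: "i < n" and j: "j < n" for i j
  proof -
    have "us ! i \<bullet> us ! j = (1 / sqrt (ws ! i \<bullet> ws ! i)) * (1 / sqrt (ws ! j \<bullet> ws ! j)) * (ws ! i \<bullet> ws ! j)"
      using i j ws(3) wsc[OF i] wsc[OF j] unfolding us_def by (simp add: mult.assoc)
    also have "\<dots> = (if i = j then 1 else 0)"
    proof (cases "i = j")
      case True
      have p: "ws ! i \<bullet> ws ! i > 0" using wspos[OF i] .
      then show ?thesis using True
        by (simp add: field_simps)
    next
      case False
      then show ?thesis using wsorth[OF i j] by simp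
    qed
    finally show ?thesis .
  qed
  have hdus: "us ! 0 = (1 / sqrt (v \<bullet> v)) \<cdot>\<^sub>v v"
    using hdws ws(3) nm unfolding us_def by (cases ws, auto)
  define W where "W = mat_of_cols n us"
  have W: "W \<in> carrier_mat n n" unfolding W_def using lus by auto
  have colW: "\<And>j. j < n \<Longrightarrow> col W j = us ! j" unfolding W_def using lus usc
    by (simp add: col_mat_of_cols)
  have WTW: "transpose_mat W * W = 1\<^sub>m n"
  proof (rule eq_matI)
    fix i j assume "i < dim_row (1\<^sub>m n)" "j < dim_col (1\<^sub>m n)"
    then have i: "i < n" and j: "j < n" by auto
    show "(transpose_mat W * W) $$ (i, j) = 1\<^sub>m n $$ (i, j)"
      using i j W colW usorth[OF i j] by (simp add: row_transpose)
  qed (insert W, auto)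
  have WWT: "W * transpose_mat W = 1\<^sub>m n"
    by (rule mat_mult_left_right_inverse[OF _ W WTW], insert W, auto)
  define A' where "A' = transpose_mat W * A * W"
  have A': "A' \<in> carrier_mat n n" using W A unfolding A'_def by auto
  have Aus0: "A *\<^sub>v (us ! 0) = e \<cdot>\<^sub>v (us ! 0)"
    unfolding hdus using Av A by (simp add: mult_mat_vec smult_smult_assoc mult.commute)
  have col0: "A' $$ (i, 0) = (if i = 0 then e else 0)" if i: "i < n" for i
  proof -
    have "A' $$ (i, 0) = row (transpose_mat W) i \<bullet> col (A * W) 0"
      unfolding A'_def using W A i nm by (simp add: assoc_mult_mat[of _ n n A n W n])
    also have "col (A * W) 0 = A *\<^sub>v (us ! 0)" using W A nm colW[of 0] by (simp add: mult_mat_vec_def)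
    also have "row (transpose_mat W) i = us ! i" using W i colW[OF i] by (simp add: row_transpose)
    also have "us ! i \<bullet> (A *\<^sub>v (us ! 0)) = e * (us ! i \<bullet> us ! 0)"
      unfolding Aus0 using usc[OF i] usc[of 0] nm by simp
    finally show ?thesis using usorth[OF i, of 0] nm by simp
  qed
  obtain A1 A2 A0 A3 where splitA': "split_block A' 1 1 = (A1,A2,A0,A3)"
    by (cases "split_block A' 1 1", auto)
  from A' nm have "dim_row A' = 1 + m" "dim_col A' = 1 + m" by auto
  from split_block[OF splitA' this] have A1: "A1 \<in> carrier_mat 1 1" and A2: "A2 \<in> carrier_mat 1 m"
    and A0: "A0 \<in> carrier_mat m 1"
    and A3: "A3 \<in> carrier_mat m m" and A'block: "A' = four_block_mat A1 A2 A0 A3" by auto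
  have A1id: "A1 = mat 1 1 (\<lambda> _. e)"
    using splitA'[unfolded split_block_def Let_def] col0[of 0] nm by auto
  have A0id: "A0 = 0\<^sub>m m 1"
    using splitA'[unfolded split_block_def Let_def] col0 nm A' by (auto intro!: eq_matI)
  have simA: "similar_mat A' A"
    unfolding similar_mat_def similar_mat_wit_def Let_def
    by (rule exI[of _ "transpose_mat W"], rule exI[of _ W], insert A A' W WTW WWT,
        auto simp: A'_def assoc_mult_mat[of _ n n _ n _ n])
  from cp char_poly_similar[OF simA]
  have "char_poly A' = [: -e,1 :] * (\<Prod> e \<leftarrow> es. [:- e, 1:])" by simp
  also have "char_poly A' = char_poly A1 * char_poly A3"
    unfolding A'block A0id by (rule char_poly_four_block_zeros_col[OF A1 A2 A3])
  also have "char_poly A1 = [: -e,1 :]"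
    by (simp add: A1id char_poly_defs det_def sign_def)
  finally have cp3: "char_poly A3 = (\<Prod> e \<leftarrow> es. [:- e, 1:])"
    by (metis mult_cancel_left pCons_eq_0_iff zero_neq_one)
  from Cons(1)[OF A3 cp3] obtain P' B' where P': "P' \<in> carrier_mat m m" and B': "B' \<in> carrier_mat m m"
    and P'TP': "transpose_mat P' * P' = 1\<^sub>m m" and P'P'T: "P' * transpose_mat P' = 1\<^sub>m m"
    and ut': "upper_triangular B'" and diag': "diag_mat B' = es" and A3eq: "A3 = P' * B' * transpose_mat P'"
    by blast
  define F where "F = four_block_mat (1\<^sub>m 1) (0\<^sub>m 1 m) (0\<^sub>m m 1) P'"
  have F: "F \<in> carrier_mat n n" unfolding F_def using P' nm by auto
  have FT: "transpose_mat F = four_block_mat (1\<^sub>m 1) (0\<^sub>m 1 m) (0\<^sub>m m 1) (transpose_mat P')"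
    unfolding F_def by (subst transpose_four_block_mat[of _ 1 1 _ m _ m], insert P', auto)
  have FTF: "transpose_mat F * F = 1\<^sub>m n"
    unfolding FT unfolding F_def nm
    by (subst mult_four_block_mat[of _ 1 1 _ m _ m _ _ 1 _ m], insert P' P'TP', auto)
  have FFT: "F * transpose_mat F = 1\<^sub>m n"
    unfolding FT unfolding F_def nm
    by (subst mult_four_block_mat[of _ 1 1 _ m _ m _ _ 1 _ m], insert P' P'P'T, auto)
  define P where "P = W * F"
  define B where "B = four_block_mat A1 (A2 * P') (0\<^sub>m m 1) B'"
  have P: "P \<in> carrier_mat n n" using W F P_def by auto
  have B: "B \<in> carrier_mat n n" using A1 A2 P' B' nm B_def by auto
  have PT: "transpose_mat P = transpose_mat F * transpose_mat W"
    unfolding P_def by (rule transpose_mult[OF W F])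
  have PTP: "transpose_mat P * P = 1\<^sub>m n"
  proof -
    have "transpose_mat P * P = transpose_mat F * (transpose_mat W * W) * F"
      unfolding PT unfolding P_def using W F by (simp add: assoc_mult_mat[of _ n n _ n _ n])
    also have "\<dots> = 1\<^sub>m n" unfolding WTW using F FTF by simp
    finally show ?thesis .
  qed
  have PPT: "P * transpose_mat P = 1\<^sub>m n"
    by (rule mat_mult_left_right_inverse[OF _ P PTP], insert P, auto)
  have ut: "upper_triangular B" unfolding B_def
    by (rule upper_triangular_four_block[OF A1 B' _ ut'], auto simp: A1id upper_triangular_def)
  have diag: "diag_mat B = e # es"
    unfolding B_def diag_four_block_mat[OF A1 B'] diag' by (simp add: A1id diag_mat_def)
  have FBF: "F * B * transpose_mat F = A'"
  proof -
    have "F * B = four_block_mat A1 (A2 * P') (0\<^sub>m m 1) (P' * B')"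
      unfolding F_def B_def
      by (subst mult_four_block_mat[of _ 1 1 _ m _ m _ _ 1 _ m], insert A1 A2 P' B', auto)
    also have "\<dots> * transpose_mat F = four_block_mat A1 (A2 * P' * transpose_mat P') (0\<^sub>m m 1) (P' * B' * transpose_mat P')"
      unfolding FT
      by (subst mult_four_block_mat[of _ 1 1 _ m _ m _ _ 1 _ m], insert A1 A2 P' B', auto)
    also have "A2 * P' * transpose_mat P' = A2" using A2 P' P'P'T by simp
    finally show ?thesis unfolding A'block A0id A3eq .
  qed
  have "P * B * transpose_mat P = W * (F * B * transpose_mat F) * transpose_mat W"
    unfolding PT unfolding P_def using W F B by (simp add: assoc_mult_mat[of _ n n _ n _ n])
  also have "\<dots> = (W * transpose_mat W) * A * (W * transpose_mat W)"
    unfolding FBF A'_def using W A by (simp add: assoc_mult_mat[of _ n n _ n _ n])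
  also have "\<dots> = A" unfolding WWT using A by simp
  finally have "A = P * B * transpose_mat P" ..
  with P B PTP PPT ut diag show ?case by blast
qed

lemma sym_eig_real:
  fixes S :: "real mat"
  assumes S: "S \<in> carrier_mat n n" and sym: "\<And>i j. i < n \<Longrightarrow> j < n \<Longrightarrow> S $$ (i,j) = S $$ (j,i)"
    and ev: "eigenvalue (map_mat complex_of_real S) z"
  shows "Im z = 0"
proof -
  let ?S = "map_mat complex_of_real S"
  from ev obtain v where "eigenvector ?S v z" unfolding eigenvalue_def by auto
  then have v: "v \<in> carrier_vec n" and v0: "v \<noteq> 0\<^sub>v n" and Sv: "?S *\<^sub>v v = z \<cdot>\<^sub>v v"
    unfolding eigenvector_def using S by auto
  have row: "(\<Sum>j=0..<n. of_real (S $$ (i,j)) * v $ j) = z * v $ i" if i: "i < n" for i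
  proof -
    have "(?S *\<^sub>v v) $ i = (z \<cdot>\<^sub>v v) $ i" using Sv by simp
    then show ?thesis using i S v by (simp add: scalar_prod_def)
  qed
  define q where "q = (\<Sum>i=0..<n. cnj (v $ i) * (\<Sum>j=0..<n. of_real (S $$ (i,j)) * v $ j))"
  define N where "N = (\<Sum>i=0..<n. cnj (v $ i) * v $ i)"
  have "q = (\<Sum>i=0..<n. cnj (v $ i) * (z * v $ i))" unfolding q_def
    by (rule sum.cong, auto simp: row)
  then have qN: "q = z * N" unfolding N_def
    by (simp add: sum_distrib_left mult_ac)
  have "cnj q = (\<Sum>i=0..<n. \<Sum>j=0..<n. v $ i * (of_real (S $$ (i,j)) * cnj (v $ j)))"
    unfolding q_def by (simp add: sum_distrib_left)
  also have "\<dots> = (\<Sum>j=0..<n. \<Sum>i=0..<n. v $ i * (of_real (S $$ (i,j)) * cnj (v $ j)))"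
    by (rule sum.swap)
  also have "\<dots> = q" unfolding q_def
    by (auto simp: sum_distrib_left sym mult_ac intro!: sum.cong)
  finally have "cnj q = q" .
  then have Imq: "Im q = 0" by (metis Reals_cnj_iff complex_is_Real_iff)
  have cw: "cnj w * w = complex_of_real ((cmod w)^2)" for w :: complex
    by (subst complex_norm_square) (rule mult.commute)
  have Nre: "N = of_real (\<Sum>i=0..<n. (cmod (v $ i))^2)" unfolding N_def of_real_sum
    by (rule sum.cong, simp, rule cw)
  obtain i where i: "i < n" and vi: "v $ i \<noteq> 0" using v v0 by (metis eq_vecI carrier_vecD index_zero_vec)
  have "(\<Sum>i=0..<n. (cmod (v $ i))^2) \<ge> (cmod (v $ i))^2"
    by (rule member_le_sum, insert i, auto)
  moreover have "(cmod (v $ i))^2 > 0" using vi by simp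
  ultimately have Npos: "(\<Sum>i=0..<n. (cmod (v $ i))^2) > 0" by linarith
  from Imq qN Nre have "Im z * (\<Sum>i=0..<n. (cmod (v $ i))^2) = 0" by simp
  with Npos show ?thesis by simp
qed

lemma sym_split:
  fixes S :: "real mat"
  assumes S: "S \<in> carrier_mat n n" and sym: "\<And>i j. i < n \<Longrightarrow> j < n \<Longrightarrow> S $$ (i,j) = S $$ (j,i)"
  shows "\<exists>es. char_poly S = (\<Prod>e\<leftarrow>es. [:-e,1:])"
proof -
  interpret mp: map_poly_inj_idom_hom "of_real :: real \<Rightarrow> complex" ..
  let ?S = "map_mat complex_of_real S"
  have S': "?S \<in> carrier_mat n n" using S by simp
  have cp: "char_poly ?S = map_poly of_real (char_poly S)" by (rule of_real_hom.char_poly_hom[OF S])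
  from char_poly_factorized[OF S'] obtain as where as: "char_poly ?S = (\<Prod>a\<leftarrow>as. [:- a, 1:])" by blast
  have real: "Im a = 0" if a: "a \<in> set as" for a
  proof -
    have "poly (char_poly ?S) a = 0" unfolding as by (rule linear_poly_root[OF a])
    then have "eigenvalue ?S a" using eigenvalue_root_char_poly[OF S'] by simp
    then show ?thesis using sym_eig_real[OF S sym] by metis
  qed
  define es where "es = map Re as"
  have "map_poly of_real (\<Prod>e\<leftarrow>es. [:-e,1:]) = (\<Prod>a\<leftarrow>as. [:- a, 1:])"
    using real unfolding es_def
  proof (induct as)
    case (Cons a as)
    have ra: "complex_of_real (Re a) = a" using Cons(2) by (simp add: complex_eq_iff)
    have m1: "map_poly complex_of_real [:-Re a,1:] = [:-a,1:]" using ra by simp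
    have IH: "map_poly of_real (\<Prod>e\<leftarrow>map Re as. [:-e,1:]) = (\<Prod>a\<leftarrow>as. [:- a, 1:])"
      using Cons by simp
    have "map_poly complex_of_real (\<Prod>e\<leftarrow>map Re (a#as). [:-e,1:]) = map_poly of_real [:-Re a,1:] * map_poly of_real (\<Prod>e\<leftarrow>map Re as. [:-e,1:])"
      by (simp only: list.map prod_list.Cons mp.hom_mult)
    also have "\<dots> = (\<Prod>a\<leftarrow>a#as. [:- a, 1:])" unfolding m1 IH by simp
    finally show ?case .
  qed simp
  with as cp have "map_poly complex_of_real (char_poly S) = map_poly complex_of_real (\<Prod>e\<leftarrow>es. [:-e,1:])" by simp
  then have "char_poly S = (\<Prod>e\<leftarrow>es. [:-e,1:])" by (rule mp.injectivity)
  then show ?thesis by blast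
qed

lemma orth_sq:
  fixes p :: "nat \<Rightarrow> nat \<Rightarrow> real" and w :: "nat \<Rightarrow> real"
  assumes O: "\<And>a b. a \<in> R \<Longrightarrow> b \<in> R \<Longrightarrow> (\<Sum>i<d. p i a * p i b) = (if a = b then 1 else 0)"
    and R: "finite R"
  shows "(\<Sum>i<d. (\<Sum>a\<in>R. p i a * w a)^2) = (\<Sum>a\<in>R. (w a)^2)"
proof -
  have "(\<Sum>i<d. (\<Sum>a\<in>R. p i a * w a)^2) = (\<Sum>i<d. \<Sum>a\<in>R. \<Sum>b\<in>R. (p i a * w a) * (p i b * w b))"
    by (simp add: power2_eq_square sum_product)
  also have "\<dots> = (\<Sum>a\<in>R. \<Sum>b\<in>R. \<Sum>i<d. (p i a * w a) * (p i b * w b))"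
    by (subst sum.swap, rule sum.cong, simp, rule sum.swap)
  also have "\<dots> = (\<Sum>a\<in>R. \<Sum>b\<in>R. w a * w b * (\<Sum>i<d. p i a * p i b))"
    by (simp add: sum_distrib_left mult_ac)
  also have "\<dots> = (\<Sum>a\<in>R. \<Sum>b\<in>R. (if a = b then w a * w b else 0))"
    by (rule sum.cong, simp, rule sum.cong, simp, simp add: O)
  also have "\<dots> = (\<Sum>a\<in>R. (w a)^2)"
    using R by (simp add: power2_eq_square)
  finally show ?thesis .
qed

lemma prod_list_mset_eq:
  assumes "mset xs = mset ys"
  shows "prod_list (map f xs) = (prod_list (map f ys) :: 'a :: comm_monoid_mult)"
  by (metis assms mset_map prod_mset_prod_list)

lemma proots_linear_prod:
  "proots (\<Prod>e\<leftarrow>es. [:- e, 1:]) = mset (es :: 'a :: idom list)"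
proof (induct es)
  case (Cons a es)
  have "monic (\<Prod>e\<leftarrow>es. [:- e, 1:] :: 'a poly)" by (rule monic_prod_list) auto
  then have nz: "(\<Prod>e\<leftarrow>es. [:- e, 1:]) \<noteq> (0 :: 'a poly)" by auto
  have eq: "(\<Prod>e\<leftarrow>a#es. [:- e, 1:]) = [:- a, 1:] * (\<Prod>e\<leftarrow>es. [:- e, 1:])"
    by (simp only: list.map prod_list.Cons o_def)
  have "proots (\<Prod>e\<leftarrow>a#es. [:- e, 1:]) = proots [:- a, 1:] + proots (\<Prod>e\<leftarrow>es. [:- e, 1:])"
    unfolding eq by (rule proots_mult) (simp, rule nz)
  also have "proots [:- a, 1:] = {#a#}" by simp
  also have "proots (\<Prod>e\<leftarrow>es. [:- e, 1:]) = mset es" by (rule Cons)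
  finally show ?case by simp
qed simp

lemma mat_mode:
  fixes X :: "real mat"
  assumes X: "X \<in> carrier_mat d m" and rd: "r \<le> d"
  shows "\<exists>U :: nat \<Rightarrow> nat \<Rightarrow> real.
    (\<forall>a<r. \<forall>b<r. (\<Sum>i<d. U i a * U i b) = (if a = b then 1 else 0)) \<and>
    (\<Sum>i<d. \<Sum>c<m. (X $$ (i,c) - (\<Sum>i'<d. (\<Sum>a<r. U i a * U i' a) * X $$ (i',c)))^2)
      = (\<Sum>t = Suc r..d. (sigma t X)^2)"
proof -
  define S where "S = X * transpose_mat X"
  have S: "S \<in> carrier_mat d d" unfolding S_def using X by auto
  have Sij: "S $$ (i,j) = (\<Sum>c<m. X $$ (i,c) * X $$ (j,c))" if "i < d" "j < d" for i j
    unfolding S_def using X that by (simp add: scalar_prod_def atLeast0LessThan row_transpose)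
  have sym: "S $$ (i,j) = S $$ (j,i)" if "i < d" "j < d" for i j
    using Sij[of i j] Sij[of j i] that by (simp add: mult.commute)
  from sym_split[OF S sym] obtain es where es: "char_poly S = (\<Prod>e\<leftarrow>es. [:-e,1:])" by blast
  define es' where "es' = rev (sort es)"
  have mes: "mset es' = mset es" unfolding es'_def by simp
  have es': "char_poly S = (\<Prod>e\<leftarrow>es'. [:-e,1:])"
    unfolding es by (rule prod_list_mset_eq, simp add: mes)
  from real_schur[OF S es'] obtain P B where P: "P \<in> carrier_mat d d" and B: "B \<in> carrier_mat d d"
    and PTP: "transpose_mat P * P = 1\<^sub>m d" and PPT: "P * transpose_mat P = 1\<^sub>m d"
    and ut: "upper_triangular B" and diag: "diag_mat B = es'" and SPB: "S = P * B * transpose_mat P"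
    by blast
  define Y where "Y = transpose_mat P * X"
  have Y: "Y \<in> carrier_mat d m" unfolding Y_def using P X by auto
  have BPSP: "B = transpose_mat P * S * P"
  proof -
    have "transpose_mat P * S * P = (transpose_mat P * P) * B * (transpose_mat P * P)"
      unfolding SPB using P B by (simp add: assoc_mult_mat[of _ d d _ d _ d])
    then show ?thesis unfolding PTP using B by simp
  qed
  have BYY: "B = Y * transpose_mat Y"
  proof -
    have "Y * transpose_mat Y = transpose_mat P * X * (transpose_mat X * P)"
      unfolding Y_def using P X by (simp add: transpose_mult[of _ d d X m])
    also have "\<dots> = transpose_mat P * S * P"
      unfolding S_def using P X
      by (simp add: assoc_mult_mat[of "transpose_mat P" d d "X * transpose_mat X" d P d]
          assoc_mult_mat[of X d m "transpose_mat X" d P d]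
          assoc_mult_mat[of "transpose_mat P" d d X m "transpose_mat X * P" d])
    finally show ?thesis using BPSP by simp
  qed
  define y where "y a c = (\<Sum>i<d. P $$ (i,a) * X $$ (i,c))" for a c
  have Yac: "Y $$ (a,c) = y a c" if "a < d" "c < m" for a c
    unfolding Y_def y_def using P X that
    by (simp add: scalar_prod_def atLeast0LessThan row_transpose)
  have Baa: "B $$ (a,a) = (\<Sum>c<m. (y a c)^2)" if a: "a < d" for a
    unfolding BYY using Y a by (simp add: scalar_prod_def atLeast0LessThan row_transpose Yac power2_eq_square)
  have Bnn: "B $$ (a,a) \<ge> 0" if "a < d" for a
    using Baa[OF that] by (simp add: sum_nonneg)
  have Bes: "B $$ (a,a) = es' ! a" if "a < d" for a
    using that B by (simp add: diag[symmetric] diag_mat_def)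
  have len: "length es' = d" using B by (simp add: diag[symmetric] diag_mat_def)
  have O1: "(\<Sum>i<d. P $$ (i,a) * P $$ (i,b)) = (if a = b then 1 else 0)" if "a < d" "b < d" for a b
  proof -
    have "(transpose_mat P * P) $$ (a,b) = (\<Sum>i<d. P $$ (i,a) * P $$ (i,b))"
      using P that by (simp add: scalar_prod_def atLeast0LessThan row_transpose)
    then show ?thesis unfolding PTP using that by simp
  qed
  have O2: "(\<Sum>a<d. P $$ (i,a) * P $$ (j,a)) = (if i = j then 1 else 0)" if "i < d" "j < d" for i j
  proof -
    have "(P * transpose_mat P) $$ (i,j) = (\<Sum>a<d. P $$ (i,a) * P $$ (j,a))"
      using P that by (simp add: scalar_prod_def atLeast0LessThan)
    then show ?thesis unfolding PPT using that by simp
  qed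
  define U where "U i a = P $$ (i,a)" for i a
  have res: "X $$ (i,c) - (\<Sum>i'<d. (\<Sum>a<r. U i a * U i' a) * X $$ (i',c))
      = (\<Sum>a\<in>{r..<d}. P $$ (i,a) * y a c)" if i: "i < d" for i c
  proof -
    have "X $$ (i,c) = (\<Sum>i'<d. (if i = i' then X $$ (i',c) else 0))"
      using i by simp
    also have "\<dots> = (\<Sum>i'<d. (\<Sum>a<d. P $$ (i,a) * P $$ (i',a)) * X $$ (i',c))"
      by (rule sum.cong, simp, simp add: O2 i)
    also have "\<dots> = (\<Sum>i'<d. \<Sum>a<d. P $$ (i,a) * (P $$ (i',a) * X $$ (i',c)))"
      by (simp add: sum_distrib_right mult.assoc)
    also have "\<dots> = (\<Sum>a<d. \<Sum>i'<d. P $$ (i,a) * (P $$ (i',a) * X $$ (i',c)))"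
      by (rule sum.swap)
    also have "\<dots> = (\<Sum>a<d. P $$ (i,a) * y a c)"
      unfolding y_def by (simp add: sum_distrib_left)
    finally have xe: "X $$ (i,c) = (\<Sum>a<d. P $$ (i,a) * y a c)" .
    have "(\<Sum>i'<d. (\<Sum>a<r. U i a * U i' a) * X $$ (i',c)) = (\<Sum>i'<d. \<Sum>a<r. P $$ (i,a) * (P $$ (i',a) * X $$ (i',c)))"
      unfolding U_def by (simp add: sum_distrib_right mult.assoc)
    also have "\<dots> = (\<Sum>a<r. \<Sum>i'<d. P $$ (i,a) * (P $$ (i',a) * X $$ (i',c)))"
      by (rule sum.swap)
    also have "\<dots> = (\<Sum>a<r. P $$ (i,a) * y a c)"
      unfolding y_def by (simp add: sum_distrib_left)
    finally have "(\<Sum>i'<d. (\<Sum>a<r. U i a * U i' a) * X $$ (i',c)) = (\<Sum>a<r. P $$ (i,a) * y a c)" .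
    moreover have "(\<Sum>a<d. P $$ (i,a) * y a c) = (\<Sum>a<r. P $$ (i,a) * y a c) + (\<Sum>a\<in>{r..<d}. P $$ (i,a) * y a c)"
      using sum.atLeastLessThan_concat[of 0 r d "\<lambda>a. P $$ (i,a) * y a c"] rd by (simp add: atLeast0LessThan)
    ultimately show ?thesis using xe by linarith
  qed
  have "(\<Sum>i<d. \<Sum>c<m. (X $$ (i,c) - (\<Sum>i'<d. (\<Sum>a<r. U i a * U i' a) * X $$ (i',c)))^2)
      = (\<Sum>i<d. \<Sum>c<m. (\<Sum>a\<in>{r..<d}. P $$ (i,a) * y a c)^2)"
    by (rule sum.cong, simp, rule sum.cong, simp, simp add: res)
  also have "\<dots> = (\<Sum>c<m. \<Sum>i<d. (\<Sum>a\<in>{r..<d}. P $$ (i,a) * y a c)^2)"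
    by (rule sum.swap)
  also have "\<dots> = (\<Sum>c<m. \<Sum>a\<in>{r..<d}. (y a c)^2)"
    by (rule sum.cong, simp, rule orth_sq, auto simp: O1)
  also have "\<dots> = (\<Sum>a\<in>{r..<d}. B $$ (a,a))"
    by (subst sum.swap, rule sum.cong, simp, simp add: Baa)
  also have "\<dots> = (\<Sum>t = Suc r..d. (sigma t X)^2)"
  proof -
    have sv: "sing_vals X = map sqrt es'"
    proof -
      have "proots (char_poly (X * transpose_mat X)) = mset es'"
        using es' unfolding S_def by (simp add: proots_linear_prod)
      moreover have "sorted_list_of_multiset (mset es') = sort es"
        by (simp add: mes)
      ultimately show ?thesis unfolding sing_vals_def es'_def by simp
    qed
    have sig: "(sigma t X)^2 = B $$ (t - 1, t - 1)" if t: "t \<in> {Suc r..d}" for t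
    proof -
      from t have t1: "1 \<le> t" "t \<le> d" by auto
      then have "sigma t X = sqrt (es' ! (t - 1))" unfolding sigma_def sv using len by simp
      then show ?thesis using Bnn[of "t - 1"] Bes[of "t - 1"] t1 by simp
    qed
    have "(\<Sum>t = Suc r..d. (sigma t X)^2) = (\<Sum>t = Suc r..d. B $$ (t - 1, t - 1))"
      by (rule sum.cong, simp, rule sig)
    also have "\<dots> = (\<Sum>a\<in>{r..<d}. B $$ (a,a))"
      by (rule sum.reindex_bij_witness[of _ Suc "\<lambda>t. t - 1"], auto)
    finally show ?thesis by simp
  qed
  finally have err: "(\<Sum>i<d. \<Sum>c<m. (X $$ (i,c) - (\<Sum>i'<d. (\<Sum>a<r. U i a * U i' a) * X $$ (i',c)))^2)
      = (\<Sum>t = Suc r..d. (sigma t X)^2)" .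
  have orth: "\<forall>a<r. \<forall>b<r. (\<Sum>i<d. U i a * U i b) = (if a = b then 1 else 0)"
    using O1 rd unfolding U_def by auto
  show ?thesis using err orth by blast
qed

lemma hosvd_abs:
  fixes ip :: "'v::ab_group_add \<Rightarrow> 'v \<Rightarrow> real" and M1 M2 M3 :: "'v \<Rightarrow> 'v"
  assumes ip_add: "\<And>x y z. ip (x + y) z = ip x z + ip y z"
    and ip_sym: "\<And>x y. ip x y = ip y x"
    and ip_pos: "\<And>x. ip x x \<ge> 0"
    and add1: "\<And>x y. M1 (x + y) = M1 x + M1 y"
    and add2: "\<And>x y. M2 (x + y) = M2 x + M2 y"
    and add3: "\<And>x y. M3 (x + y) = M3 x + M3 y"
    and adj1: "\<And>x y. ip (M1 x) y = ip x (M1 y)"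
    and adj2: "\<And>x y. ip (M2 x) y = ip x (M2 y)"
    and adj3: "\<And>x y. ip (M3 x) y = ip x (M3 y)"
    and idem1: "\<And>x. M1 (M1 x) = M1 x"
    and idem2: "\<And>x. M2 (M2 x) = M2 x"
    and idem3: "\<And>x. M3 (M3 x) = M3 x"
    and c12: "\<And>x. M1 (M2 x) = M2 (M1 x)"
  shows "ip (x - M1 (M2 (M3 x))) (x - M1 (M2 (M3 x)))
    \<le> ip (x - M1 x) (x - M1 x) + ip (x - M2 x) (x - M2 x) + ip (x - M3 x) (x - M3 x)"
proof -
  have ip0: "ip 0 z = 0" for z using ip_add[of 0 0 z] by simp
  have ip_add2: "ip z (x + y) = ip z x + ip z y" for x y z using ip_add ip_sym by metis
  have ip_minus: "ip (x - y) z = ip x z - ip y z" for x y z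
    using ip_add[of "x - y" y z] by simp
  have ip_minus2: "ip z (x - y) = ip z x - ip z y" for x y z
    using ip_minus ip_sym by metis
  have gen: "ip (x - M x) (M y) = 0" and contr: "ip (M x) (M x) \<le> ip x x"
    if add: "\<And>x y. M (x + y) = M x + M y" and adj: "\<And>x y. ip (M x) y = ip x (M y)"
      and idem: "\<And>x. M (M x) = M x" for M :: "'v \<Rightarrow> 'v" and x y
  proof -
    have Mminus: "M (x - y) = M x - M y" for x y using add[of "x - y" y] by (simp add: algebra_simps)
    show o: "ip (x - M x) (M y) = 0" for x y
      unfolding adj[symmetric] Mminus idem by (simp add: ip0)
    have "ip x x = ip (M x + (x - M x)) (M x + (x - M x))" by simp
    also have "\<dots> = ip (M x) (M x) + 2 * ip (x - M x) (M x) + ip (x - M x) (x - M x)"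
      unfolding ip_add ip_add2 using ip_sym[of "M x" "x - M x"] by simp
    also have "\<dots> = ip (M x) (M x) + ip (x - M x) (x - M x)" using o[of x x] by simp
    finally show "ip (M x) (M x) \<le> ip x x" using ip_pos[of "x - M x"] by simp
  qed
  have M1minus: "M1 (x - y) = M1 x - M1 y" for x y using add1[of "x - y" y] by (simp add: algebra_simps)
  have M2minus: "M2 (x - y) = M2 x - M2 y" for x y using add2[of "x - y" y] by (simp add: algebra_simps)
  define a where "a = x - M1 x"
  define b where "b = M1 (x - M2 x)"
  define c where "c = M1 (M2 (x - M3 x))"
  have dec: "x - M1 (M2 (M3 x)) = a + b + c"
    unfolding a_def b_def c_def M1minus M2minus by (simp add: algebra_simps)
  have ab: "ip a b = 0" unfolding a_def b_def by (rule gen[OF add1 adj1 idem1])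
  have ac: "ip a c = 0" unfolding a_def c_def by (rule gen[OF add1 adj1 idem1])
  have bc: "ip b c = 0"
  proof -
    have "b = M1 x - M2 (M1 x)" unfolding b_def M1minus c12 ..
    moreover have "c = M2 (M1 (x - M3 x))" unfolding c_def c12 ..
    ultimately show ?thesis using gen[OF add2 adj2 idem2] by simp
  qed
  have "ip (a + b + c) (a + b + c) = ip a a + ip b b + ip c c
      + 2 * ip a b + 2 * ip a c + 2 * ip b c"
    unfolding ip_add ip_add2 using ip_sym[of a b] ip_sym[of a c] ip_sym[of b c] by simp
  also have "\<dots> = ip a a + ip b b + ip c c" using ab ac bc by simp
  finally have eq: "ip (a + b + c) (a + b + c) = ip a a + ip b b + ip c c" .
  have bb: "ip b b \<le> ip (x - M2 x) (x - M2 x)" unfolding b_def by (rule contr[OF add1 adj1 idem1])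
  have "ip c c \<le> ip (M2 (x - M3 x)) (M2 (x - M3 x))" unfolding c_def by (rule contr[OF add1 adj1 idem1])
  also have "\<dots> \<le> ip (x - M3 x) (x - M3 x)" by (rule contr[OF add2 adj2 idem2])
  finally have cc: "ip c c \<le> ip (x - M3 x) (x - M3 x)" .
  show ?thesis unfolding dec eq a_def[symmetric] using bb cc by simp
qed

definition ip3 :: "nat \<Rightarrow> nat \<Rightarrow> nat \<Rightarrow> (nat \<Rightarrow> nat \<Rightarrow> nat \<Rightarrow> real) \<Rightarrow> (nat \<Rightarrow> nat \<Rightarrow> nat \<Rightarrow> real) \<Rightarrow> real" where
  "ip3 d1 d2 d3 X Y = (\<Sum>i<d1. \<Sum>j<d2. \<Sum>k<d3. X i j k * Y i j k)"

definition proj :: "(nat \<Rightarrow> nat \<Rightarrow> real) \<Rightarrow> nat \<Rightarrow> nat \<Rightarrow> nat \<Rightarrow> real" where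
  "proj U r i i' = (\<Sum>a<r. U i a * U i' a)"

definition orthc :: "(nat \<Rightarrow> nat \<Rightarrow> real) \<Rightarrow> nat \<Rightarrow> nat \<Rightarrow> bool" where
  "orthc U d r \<longleftrightarrow> (\<forall>a<r. \<forall>b<r. (\<Sum>i<d. U i a * U i b) = (if a = b then 1 else 0))"

definition mo1 :: "nat \<Rightarrow> nat \<Rightarrow> nat \<Rightarrow> (nat \<Rightarrow> nat \<Rightarrow> real) \<Rightarrow> (nat \<Rightarrow> nat \<Rightarrow> nat \<Rightarrow> real) \<Rightarrow> (nat \<Rightarrow> nat \<Rightarrow> nat \<Rightarrow> real)" where
  "mo1 d1 d2 d3 Q X = (\<lambda>i j k. if i < d1 \<and> j < d2 \<and> k < d3 then \<Sum>i'<d1. Q i i' * X i' j k else 0)"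
definition mo2 :: "nat \<Rightarrow> nat \<Rightarrow> nat \<Rightarrow> (nat \<Rightarrow> nat \<Rightarrow> real) \<Rightarrow> (nat \<Rightarrow> nat \<Rightarrow> nat \<Rightarrow> real) \<Rightarrow> (nat \<Rightarrow> nat \<Rightarrow> nat \<Rightarrow> real)" where
  "mo2 d1 d2 d3 Q X = (\<lambda>i j k. if i < d1 \<and> j < d2 \<and> k < d3 then \<Sum>j'<d2. Q j j' * X i j' k else 0)"
definition mo3 :: "nat \<Rightarrow> nat \<Rightarrow> nat \<Rightarrow> (nat \<Rightarrow> nat \<Rightarrow> real) \<Rightarrow> (nat \<Rightarrow> nat \<Rightarrow> nat \<Rightarrow> real) \<Rightarrow> (nat \<Rightarrow> nat \<Rightarrow> nat \<Rightarrow> real)" where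
  "mo3 d1 d2 d3 Q X = (\<lambda>i j k. if i < d1 \<and> j < d2 \<and> k < d3 then \<Sum>k'<d3. Q k k' * X i j k' else 0)"

lemma proj_sym: "proj U r i i' = proj U r i' i"
  unfolding proj_def by (simp add: mult.commute)

lemma proj_idem:
  assumes o: "orthc U d r"
  shows "(\<Sum>i'<d. proj U r i i' * proj U r i' i'') = proj U r i i''"
proof -
  have "(\<Sum>i'<d. proj U r i i' * proj U r i' i'') = (\<Sum>i'<d. \<Sum>a<r. \<Sum>b<r. (U i a * U i'' b) * (U i' a * U i' b))"
    unfolding proj_def by (simp add: sum_product mult_ac)
  also have "\<dots> = (\<Sum>a<r. \<Sum>b<r. \<Sum>i'<d. (U i a * U i'' b) * (U i' a * U i' b))"
    by (subst sum.swap, rule sum.cong, simp, rule sum.swap)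
  also have "\<dots> = (\<Sum>a<r. \<Sum>b<r. (if a = b then U i a * U i'' b else 0))"
    using o unfolding orthc_def by (intro sum.cong refl) (simp add: sum_distrib_left[symmetric])
  also have "\<dots> = proj U r i i''" unfolding proj_def by (rule sum.cong) auto
  finally show ?thesis .
qed

lemma sym_pair:
  fixes Q :: "'a \<Rightarrow> 'a \<Rightarrow> real"
  assumes "\<And>a b. Q a b = Q b a"
  shows "(\<Sum>a\<in>A. (\<Sum>b\<in>A. Q a b * f b) * g a) = (\<Sum>a\<in>A. f a * (\<Sum>b\<in>A. Q a b * g b))"
proof -
  have "(\<Sum>a\<in>A. (\<Sum>b\<in>A. Q a b * f b) * g a) = (\<Sum>a\<in>A. \<Sum>b\<in>A. Q a b * f b * g a)"
    by (simp add: sum_distrib_right)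
  also have "\<dots> = (\<Sum>b\<in>A. \<Sum>a\<in>A. Q a b * f b * g a)" by (rule sum.swap)
  also have "\<dots> = (\<Sum>b\<in>A. f b * (\<Sum>a\<in>A. Q b a * g a))"
    by (simp add: sum_distrib_left assms mult_ac)
  finally show ?thesis .
qed

lemma swap_in2: "(\<Sum>i\<in>A. \<Sum>j\<in>B. \<Sum>k\<in>C. f i j k) = (\<Sum>j\<in>B. \<Sum>k\<in>C. \<Sum>i\<in>A. f i j k)"
proof -
  have "(\<Sum>i\<in>A. \<Sum>j\<in>B. \<Sum>k\<in>C. f i j k) = (\<Sum>j\<in>B. \<Sum>i\<in>A. \<Sum>k\<in>C. f i j k)" by (rule sum.swap)
  also have "\<dots> = (\<Sum>j\<in>B. \<Sum>k\<in>C. \<Sum>i\<in>A. f i j k)" by (rule sum.cong, simp, rule sum.swap)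
  finally show ?thesis .
qed

lemma ip3_add: "ip3 d1 d2 d3 (X + Y) Z = ip3 d1 d2 d3 X Z + ip3 d1 d2 d3 Y Z"
  unfolding ip3_def by (simp add: sum.distrib distrib_right)

lemma ip3_sym: "ip3 d1 d2 d3 X Y = ip3 d1 d2 d3 Y X"
  unfolding ip3_def by (simp add: mult.commute)

lemma ip3_pos: "ip3 d1 d2 d3 X X \<ge> 0"
  unfolding ip3_def by (auto intro!: sum_nonneg)

lemma mo1_add: "mo1 d1 d2 d3 Q (X + Y) = mo1 d1 d2 d3 Q X + mo1 d1 d2 d3 Q Y"
  unfolding mo1_def by (rule ext)+ (simp add: sum.distrib distrib_left)
lemma mo2_add: "mo2 d1 d2 d3 Q (X + Y) = mo2 d1 d2 d3 Q X + mo2 d1 d2 d3 Q Y"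
  unfolding mo2_def by (rule ext)+ (simp add: sum.distrib distrib_left)
lemma mo3_add: "mo3 d1 d2 d3 Q (X + Y) = mo3 d1 d2 d3 Q X + mo3 d1 d2 d3 Q Y"
  unfolding mo3_def by (rule ext)+ (simp add: sum.distrib distrib_left)

lemma mo1_adj:
  assumes "\<And>a b. Q a b = Q b a"
  shows "ip3 d1 d2 d3 (mo1 d1 d2 d3 Q X) Y = ip3 d1 d2 d3 X (mo1 d1 d2 d3 Q Y)"
proof -
  have "ip3 d1 d2 d3 (mo1 d1 d2 d3 Q X) Y = (\<Sum>i<d1. \<Sum>j<d2. \<Sum>k<d3. (\<Sum>i'<d1. Q i i' * X i' j k) * Y i j k)"
    unfolding ip3_def mo1_def by simp
  also have "\<dots> = (\<Sum>j<d2. \<Sum>k<d3. \<Sum>i<d1. (\<Sum>i'<d1. Q i i' * X i' j k) * Y i j k)" by (rule swap_in2)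
  also have "\<dots> = (\<Sum>j<d2. \<Sum>k<d3. \<Sum>i<d1. X i j k * (\<Sum>i'<d1. Q i i' * Y i' j k))"
    by (intro sum.cong refl sym_pair assms)
  also have "\<dots> = (\<Sum>i<d1. \<Sum>j<d2. \<Sum>k<d3. X i j k * (\<Sum>i'<d1. Q i i' * Y i' j k))" by (rule swap_in2[symmetric])
  also have "\<dots> = ip3 d1 d2 d3 X (mo1 d1 d2 d3 Q Y)"
    unfolding ip3_def mo1_def by simp
  finally show ?thesis .
qed

lemma mo2_adj:
  assumes "\<And>a b. Q a b = Q b a"
  shows "ip3 d1 d2 d3 (mo2 d1 d2 d3 Q X) Y = ip3 d1 d2 d3 X (mo2 d1 d2 d3 Q Y)"
proof -
  have "ip3 d1 d2 d3 (mo2 d1 d2 d3 Q X) Y = (\<Sum>i<d1. \<Sum>j<d2. \<Sum>k<d3. (\<Sum>j'<d2. Q j j' * X i j' k) * Y i j k)"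
    unfolding ip3_def mo2_def by simp
  also have "\<dots> = (\<Sum>i<d1. \<Sum>k<d3. \<Sum>j<d2. (\<Sum>j'<d2. Q j j' * X i j' k) * Y i j k)"
    by (rule sum.cong, simp, rule sum.swap)
  also have "\<dots> = (\<Sum>i<d1. \<Sum>k<d3. \<Sum>j<d2. X i j k * (\<Sum>j'<d2. Q j j' * Y i j' k))"
    by (intro sum.cong refl sym_pair assms)
  also have "\<dots> = (\<Sum>i<d1. \<Sum>j<d2. \<Sum>k<d3. X i j k * (\<Sum>j'<d2. Q j j' * Y i j' k))"
    by (rule sum.cong, simp, rule sum.swap)
  also have "\<dots> = ip3 d1 d2 d3 X (mo2 d1 d2 d3 Q Y)"
    unfolding ip3_def mo2_def by simp
  finally show ?thesis .
qed

lemma mo3_adj: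
  assumes "\<And>a b. Q a b = Q b a"
  shows "ip3 d1 d2 d3 (mo3 d1 d2 d3 Q X) Y = ip3 d1 d2 d3 X (mo3 d1 d2 d3 Q Y)"
proof -
  have "ip3 d1 d2 d3 (mo3 d1 d2 d3 Q X) Y = (\<Sum>i<d1. \<Sum>j<d2. \<Sum>k<d3. (\<Sum>k'<d3. Q k k' * X i j k') * Y i j k)"
    unfolding ip3_def mo3_def by simp
  also have "\<dots> = (\<Sum>i<d1. \<Sum>j<d2. \<Sum>k<d3. X i j k * (\<Sum>k'<d3. Q k k' * Y i j k'))"
    by (intro sum.cong refl sym_pair assms)
  also have "\<dots> = ip3 d1 d2 d3 X (mo3 d1 d2 d3 Q Y)"
    unfolding ip3_def mo3_def by simp
  finally show ?thesis .
qed

lemma mo1_idem: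
  assumes "\<And>i i''. (\<Sum>i'<d1. Q i i' * Q i' i'') = Q i i''"
  shows "mo1 d1 d2 d3 Q (mo1 d1 d2 d3 Q X) = mo1 d1 d2 d3 Q X"
proof (rule ext, rule ext, rule ext)
  fix i j k
  show "mo1 d1 d2 d3 Q (mo1 d1 d2 d3 Q X) i j k = mo1 d1 d2 d3 Q X i j k"
  proof (cases "i < d1 \<and> j < d2 \<and> k < d3")
    case True
    have "(\<Sum>i'<d1. Q i i' * (\<Sum>i''<d1. Q i' i'' * X i'' j k)) = (\<Sum>i'<d1. \<Sum>i''<d1. Q i i' * Q i' i'' * X i'' j k)"
      by (simp add: sum_distrib_left mult.assoc)
    also have "\<dots> = (\<Sum>i''<d1. \<Sum>i'<d1. Q i i' * Q i' i'' * X i'' j k)" by (rule sum.swap)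
    also have "\<dots> = (\<Sum>i''<d1. Q i i'' * X i'' j k)"
      by (rule sum.cong, simp, simp add: sum_distrib_right[symmetric] assms)
    finally show ?thesis using True unfolding mo1_def by simp
  qed (auto simp: mo1_def)
qed

lemma mo2_idem:
  assumes "\<And>i i''. (\<Sum>i'<d2. Q i i' * Q i' i'') = Q i i''"
  shows "mo2 d1 d2 d3 Q (mo2 d1 d2 d3 Q X) = mo2 d1 d2 d3 Q X"
proof (rule ext, rule ext, rule ext)
  fix i j k
  show "mo2 d1 d2 d3 Q (mo2 d1 d2 d3 Q X) i j k = mo2 d1 d2 d3 Q X i j k"
  proof (cases "i < d1 \<and> j < d2 \<and> k < d3")
    case True
    have "(\<Sum>j'<d2. Q j j' * (\<Sum>j''<d2. Q j' j'' * X i j'' k)) = (\<Sum>j'<d2. \<Sum>j''<d2. Q j j' * Q j' j'' * X i j'' k)"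
      by (simp add: sum_distrib_left mult.assoc)
    also have "\<dots> = (\<Sum>j''<d2. \<Sum>j'<d2. Q j j' * Q j' j'' * X i j'' k)" by (rule sum.swap)
    also have "\<dots> = (\<Sum>j''<d2. Q j j'' * X i j'' k)"
      by (rule sum.cong, simp, simp add: sum_distrib_right[symmetric] assms)
    finally show ?thesis using True unfolding mo2_def by simp
  qed (auto simp: mo2_def)
qed

lemma mo3_idem:
  assumes "\<And>i i''. (\<Sum>i'<d3. Q i i' * Q i' i'') = Q i i''"
  shows "mo3 d1 d2 d3 Q (mo3 d1 d2 d3 Q X) = mo3 d1 d2 d3 Q X"
proof (rule ext, rule ext, rule ext)
  fix i j k
  show "mo3 d1 d2 d3 Q (mo3 d1 d2 d3 Q X) i j k = mo3 d1 d2 d3 Q X i j k"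
  proof (cases "i < d1 \<and> j < d2 \<and> k < d3")
    case True
    have "(\<Sum>k'<d3. Q k k' * (\<Sum>k''<d3. Q k' k'' * X i j k'')) = (\<Sum>k'<d3. \<Sum>k''<d3. Q k k' * Q k' k'' * X i j k'')"
      by (simp add: sum_distrib_left mult.assoc)
    also have "\<dots> = (\<Sum>k''<d3. \<Sum>k'<d3. Q k k' * Q k' k'' * X i j k'')" by (rule sum.swap)
    also have "\<dots> = (\<Sum>k''<d3. Q k k'' * X i j k'')"
      by (rule sum.cong, simp, simp add: sum_distrib_right[symmetric] assms)
    finally show ?thesis using True unfolding mo3_def by simp
  qed (auto simp: mo3_def)
qed

lemma mo12_comm: "mo1 d1 d2 d3 Q1 (mo2 d1 d2 d3 Q2 X) = mo2 d1 d2 d3 Q2 (mo1 d1 d2 d3 Q1 X)"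
proof (rule ext, rule ext, rule ext)
  fix i j k
  show "mo1 d1 d2 d3 Q1 (mo2 d1 d2 d3 Q2 X) i j k = mo2 d1 d2 d3 Q2 (mo1 d1 d2 d3 Q1 X) i j k"
  proof (cases "i < d1 \<and> j < d2 \<and> k < d3")
    case True
    have "(\<Sum>i'<d1. Q1 i i' * (\<Sum>j'<d2. Q2 j j' * X i' j' k)) = (\<Sum>i'<d1. \<Sum>j'<d2. Q2 j j' * (Q1 i i' * X i' j' k))"
      by (simp add: sum_distrib_left mult_ac)
    also have "\<dots> = (\<Sum>j'<d2. \<Sum>i'<d1. Q2 j j' * (Q1 i i' * X i' j' k))" by (rule sum.swap)
    also have "\<dots> = (\<Sum>j'<d2. Q2 j j' * (\<Sum>i'<d1. Q1 i i' * X i' j' k))"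
      by (simp add: sum_distrib_left)
    finally show ?thesis using True unfolding mo1_def mo2_def by simp
  qed (auto simp: mo1_def mo2_def)
qed

lemma jk_bound: "j < a \<Longrightarrow> k < b \<Longrightarrow> j * b + k < a * (b::nat)"
proof -
  assume j: "j < a" and k: "k < b"
  have "j * b + k < (j + 1) * b" using k by simp
  also have "\<dots> \<le> a * b" using j by (intro mult_right_mono) auto
  finally show ?thesis .
qed

lemma sum_divmod:
  fixes a b :: nat
  shows "(\<Sum>c<a*b. h (c div b) (c mod b)) = (\<Sum>j<a. \<Sum>k<b. (h j k :: real))"
proof -
  have "(\<Sum>j<a. \<Sum>k<b. h j k) = (\<Sum>(j,k)\<in>{..<a} \<times> {..<b}. h j k)"
    by (simp add: sum.cartesian_product')
  also have "\<dots> = (\<Sum>c<a*b. h (c div b) (c mod b))"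
    apply (rule sum.reindex_bij_witness[of _ "\<lambda>c. (c div b, c mod b)" "\<lambda>(j,k). j * b + k"])
        apply (auto simp: jk_bound less_mult_imp_div_less)
    subgoal for c by (cases "b = 0") auto
    done
  finally show ?thesis ..
qed

lemma tens_mode:
  fixes F :: "nat \<Rightarrow> nat \<Rightarrow> nat \<Rightarrow> real"
  assumes rd: "r \<le> d1"
  shows "\<exists>U. orthc U d1 r \<and>
    (\<Sum>i<d1. \<Sum>j<d2. \<Sum>k<d3. (F i j k - (\<Sum>i'<d1. proj U r i i' * F i' j k))^2)
      = (\<Sum>t = Suc r..d1. (sigma t (unfold1 d1 d2 d3 F))^2)"
proof -
  define X where "X = unfold1 d1 d2 d3 F"
  have X: "X \<in> carrier_mat d1 (d2 * d3)" unfolding X_def unfold1_def by simp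
  from mat_mode[OF X rd] obtain U where o: "\<forall>a<r. \<forall>b<r. (\<Sum>i<d1. U i a * U i b) = (if a = b then 1 else 0)"
    and e: "(\<Sum>i<d1. \<Sum>c<d2 * d3. (X $$ (i,c) - (\<Sum>i'<d1. (\<Sum>a<r. U i a * U i' a) * X $$ (i',c)))^2)
      = (\<Sum>t = Suc r..d1. (sigma t X)^2)" by blast
  have "(\<Sum>i<d1. \<Sum>c<d2 * d3. (X $$ (i,c) - (\<Sum>i'<d1. (\<Sum>a<r. U i a * U i' a) * X $$ (i',c)))^2)
     = (\<Sum>i<d1. \<Sum>c<d2 * d3. (\<lambda>j k. (F i j k - (\<Sum>i'<d1. proj U r i i' * F i' j k))^2) (c div d3) (c mod d3))"
    unfolding X_def unfold1_def proj_def by (intro sum.cong refl) simp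
  also have "\<dots> = (\<Sum>i<d1. \<Sum>j<d2. \<Sum>k<d3. (F i j k - (\<Sum>i'<d1. proj U r i i' * F i' j k))^2)"
    by (rule sum.cong, simp, rule sum_divmod)
  finally have eq: "(\<Sum>i<d1. \<Sum>j<d2. \<Sum>k<d3. (F i j k - (\<Sum>i'<d1. proj U r i i' * F i' j k))^2)
      = (\<Sum>t = Suc r..d1. (sigma t (unfold1 d1 d2 d3 F))^2)" using e unfolding X_def by simp
  show ?thesis using eq o unfolding orthc_def by blast
qed

lemma pull3: "(\<Sum>a\<in>A. \<Sum>b\<in>B. \<Sum>c\<in>C. \<Sum>x\<in>X. h a b c x) = (\<Sum>x\<in>X. \<Sum>a\<in>A. \<Sum>b\<in>B. \<Sum>c\<in>C. (h a b c x :: real))"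
proof -
  have "(\<Sum>a\<in>A. \<Sum>b\<in>B. \<Sum>c\<in>C. \<Sum>x\<in>X. h a b c x) = (\<Sum>a\<in>A. \<Sum>b\<in>B. \<Sum>x\<in>X. \<Sum>c\<in>C. h a b c x)"
    by (intro sum.cong refl sum.swap)
  also have "\<dots> = (\<Sum>a\<in>A. \<Sum>x\<in>X. \<Sum>b\<in>B. \<Sum>c\<in>C. h a b c x)"
    by (intro sum.cong refl sum.swap)
  also have "\<dots> = (\<Sum>x\<in>X. \<Sum>a\<in>A. \<Sum>b\<in>B. \<Sum>c\<in>C. h a b c x)"
    by (rule sum.swap)
  finally show ?thesis .
qed

lemma swap33: "(\<Sum>a\<in>A. \<Sum>b\<in>B. \<Sum>c\<in>C. \<Sum>x\<in>X. \<Sum>y\<in>Y. \<Sum>z\<in>Z. f a b c x y z)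
  = (\<Sum>x\<in>X. \<Sum>y\<in>Y. \<Sum>z\<in>Z. \<Sum>a\<in>A. \<Sum>b\<in>B. \<Sum>c\<in>C. (f a b c x y z :: real))"
proof -
  have "(\<Sum>a\<in>A. \<Sum>b\<in>B. \<Sum>c\<in>C. \<Sum>x\<in>X. \<Sum>y\<in>Y. \<Sum>z\<in>Z. f a b c x y z)
    = (\<Sum>x\<in>X. \<Sum>a\<in>A. \<Sum>b\<in>B. \<Sum>c\<in>C. \<Sum>y\<in>Y. \<Sum>z\<in>Z. f a b c x y z)" by (rule pull3)
  also have "\<dots> = (\<Sum>x\<in>X. \<Sum>y\<in>Y. \<Sum>a\<in>A. \<Sum>b\<in>B. \<Sum>c\<in>C. \<Sum>z\<in>Z. f a b c x y z)"
    by (intro sum.cong refl pull3)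
  also have "\<dots> = (\<Sum>x\<in>X. \<Sum>y\<in>Y. \<Sum>z\<in>Z. \<Sum>a\<in>A. \<Sum>b\<in>B. \<Sum>c\<in>C. f a b c x y z)"
    by (intro sum.cong refl pull3)
  finally show ?thesis .
qed

lemma tucker_eq:
  fixes E :: "nat \<Rightarrow> nat \<Rightarrow> nat \<Rightarrow> real" and U1 U2 U3 :: "nat \<Rightarrow> nat \<Rightarrow> real"
  assumes p: "p < d1" and q: "q < d2" and k: "k < d3"
  and G_def: "G = (\<lambda>a b c. \<Sum>p'<d1. \<Sum>q'<d2. \<Sum>k'<d3. E p' q' k' * U1 p' a * U2 q' b * U3 k' c)"
  shows "tucker r1 r2 r3 G U1 U2 U3 p q k
    = mo1 d1 d2 d3 (proj U1 r1) (mo2 d1 d2 d3 (proj U2 r2) (mo3 d1 d2 d3 (proj U3 r3) E)) p q k"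
proof -
  define t where "t p' q' k' a b c = E p' q' k' * (U1 p' a * U1 p a) * (U2 q' b * U2 q b) * (U3 k' c * U3 k c)"
    for p' q' k' a b c
  have "tucker r1 r2 r3 G U1 U2 U3 p q k = (\<Sum>a<r1. \<Sum>b<r2. \<Sum>c<r3. \<Sum>p'<d1. \<Sum>q'<d2. \<Sum>k'<d3. t p' q' k' a b c)"
    unfolding tucker_def G_def t_def by (simp add: sum_distrib_right sum_distrib_left mult_ac)
  also have "\<dots> = (\<Sum>p'<d1. \<Sum>q'<d2. \<Sum>k'<d3. \<Sum>a<r1. \<Sum>b<r2. \<Sum>c<r3. t p' q' k' a b c)"
    by (rule swap33)
  also have "\<dots> = (\<Sum>p'<d1. \<Sum>q'<d2. \<Sum>k'<d3. proj U1 r1 p p' * proj U2 r2 q q' * proj U3 r3 k k' * E p' q' k')"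
    unfolding t_def proj_def
    by (intro sum.cong refl) (simp add: sum_distrib_left sum_distrib_right mult_ac, rule sum.swap)
  also have "\<dots> = mo1 d1 d2 d3 (proj U1 r1) (mo2 d1 d2 d3 (proj U2 r2) (mo3 d1 d2 d3 (proj U3 r3) E)) p q k"
    unfolding mo1_def mo2_def mo3_def using p q k
    by (simp add: sum_distrib_left mult_ac)
  finally show ?thesis .
qed

lemma layer_bound:
  fixes E :: "nat \<Rightarrow> nat \<Rightarrow> nat \<Rightarrow> real"
  assumes r1: "r1 \<le> d1" and r2: "r2 \<le> d2" and r3: "r3 \<le> d3"
  shows "\<exists>G U1 U2 U3. frob3 d1 d2 d3 (\<lambda>p q k. tucker r1 r2 r3 G U1 U2 U3 p q k - E p q k)
    \<le> sqrt ((\<Sum>t = Suc r1..d1. (sigma t (unfold1 d1 d2 d3 E))\<^sup>2)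
          + (\<Sum>t = Suc r2..d2. (sigma t (unfold2 d1 d2 d3 E))\<^sup>2)
          + (\<Sum>t = Suc r3..d3. (sigma t (unfold3 d1 d2 d3 E))\<^sup>2))"
proof -
  obtain U1 where o1: "orthc U1 d1 r1" and e1: "(\<Sum>i<d1. \<Sum>j<d2. \<Sum>k<d3. (E i j k - (\<Sum>i'<d1. proj U1 r1 i i' * E i' j k))^2)
      = (\<Sum>t = Suc r1..d1. (sigma t (unfold1 d1 d2 d3 E))^2)"
    using tens_mode[OF r1, of E d3 d2] by blast
  obtain U2 where o2: "orthc U2 d2 r2" and e2: "(\<Sum>j<d2. \<Sum>i<d1. \<Sum>k<d3. (E i j k - (\<Sum>j'<d2. proj U2 r2 j j' * E i j' k))^2)
      = (\<Sum>t = Suc r2..d2. (sigma t (unfold1 d2 d1 d3 (\<lambda>j i k. E i j k)))^2)"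
    using tens_mode[OF r2, of "\<lambda>j i k. E i j k" d3 d1] by blast
  obtain U3 where o3: "orthc U3 d3 r3" and e3: "(\<Sum>k<d3. \<Sum>i<d1. \<Sum>j<d2. (E i j k - (\<Sum>k'<d3. proj U3 r3 k k' * E i j k'))^2)
      = (\<Sum>t = Suc r3..d3. (sigma t (unfold1 d3 d1 d2 (\<lambda>k i j. E i j k)))^2)"
    using tens_mode[OF r3, of "\<lambda>k i j. E i j k" d2 d1] by blast
  have u2: "unfold1 d2 d1 d3 (\<lambda>j i k. E i j k) = unfold2 d1 d2 d3 E" unfolding unfold1_def unfold2_def by (rule refl)
  have u3: "unfold1 d3 d1 d2 (\<lambda>k i j. E i j k) = unfold3 d1 d2 d3 E" unfolding unfold1_def unfold3_def by (rule refl)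
  define M1 where "M1 = mo1 d1 d2 d3 (proj U1 r1)"
  define M2 where "M2 = mo2 d1 d2 d3 (proj U2 r2)"
  define M3 where "M3 = mo3 d1 d2 d3 (proj U3 r3)"
  have a1: "\<And>x y. M1 (x + y) = M1 x + M1 y" unfolding M1_def by (rule mo1_add)
  have a2: "\<And>x y. M2 (x + y) = M2 x + M2 y" unfolding M2_def by (rule mo2_add)
  have a3: "\<And>x y. M3 (x + y) = M3 x + M3 y" unfolding M3_def by (rule mo3_add)
  have j1: "\<And>x y. ip3 d1 d2 d3 (M1 x) y = ip3 d1 d2 d3 x (M1 y)" unfolding M1_def by (rule mo1_adj, rule proj_sym)
  have j2: "\<And>x y. ip3 d1 d2 d3 (M2 x) y = ip3 d1 d2 d3 x (M2 y)" unfolding M2_def by (rule mo2_adj, rule proj_sym)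
  have j3: "\<And>x y. ip3 d1 d2 d3 (M3 x) y = ip3 d1 d2 d3 x (M3 y)" unfolding M3_def by (rule mo3_adj, rule proj_sym)
  have k1: "\<And>x. M1 (M1 x) = M1 x" unfolding M1_def by (rule mo1_idem, rule proj_idem[OF o1])
  have k2: "\<And>x. M2 (M2 x) = M2 x" unfolding M2_def by (rule mo2_idem, rule proj_idem[OF o2])
  have k3: "\<And>x. M3 (M3 x) = M3 x" unfolding M3_def by (rule mo3_idem, rule proj_idem[OF o3])
  have c: "\<And>x. M1 (M2 x) = M2 (M1 x)" unfolding M1_def M2_def by (rule mo12_comm)
  have hos: "ip3 d1 d2 d3 (E - M1 (M2 (M3 E))) (E - M1 (M2 (M3 E)))
    \<le> ip3 d1 d2 d3 (E - M1 E) (E - M1 E) + ip3 d1 d2 d3 (E - M2 E) (E - M2 E) + ip3 d1 d2 d3 (E - M3 E) (E - M3 E)"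
    by (rule hosvd_abs[of "ip3 d1 d2 d3" M1 M2 M3 E, OF ip3_add ip3_sym ip3_pos a1 a2 a3 j1 j2 j3 k1 k2 k3 c])
  have i1: "ip3 d1 d2 d3 (E - M1 E) (E - M1 E) = (\<Sum>t = Suc r1..d1. (sigma t (unfold1 d1 d2 d3 E))^2)"
    unfolding e1[symmetric] ip3_def M1_def mo1_def
    by (intro sum.cong refl) (simp add: power2_eq_square)
  have i2: "ip3 d1 d2 d3 (E - M2 E) (E - M2 E) = (\<Sum>t = Suc r2..d2. (sigma t (unfold2 d1 d2 d3 E))^2)"
  proof -
    have "ip3 d1 d2 d3 (E - M2 E) (E - M2 E) = (\<Sum>i<d1. \<Sum>j<d2. \<Sum>k<d3. (E i j k - (\<Sum>j'<d2. proj U2 r2 j j' * E i j' k))^2)"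
      unfolding ip3_def M2_def mo2_def by (intro sum.cong refl) (simp add: power2_eq_square)
    also have "\<dots> = (\<Sum>j<d2. \<Sum>i<d1. \<Sum>k<d3. (E i j k - (\<Sum>j'<d2. proj U2 r2 j j' * E i j' k))^2)"
      by (rule sum.swap)
    finally show ?thesis unfolding e2 u2 .
  qed
  have i3: "ip3 d1 d2 d3 (E - M3 E) (E - M3 E) = (\<Sum>t = Suc r3..d3. (sigma t (unfold3 d1 d2 d3 E))^2)"
  proof -
    have "ip3 d1 d2 d3 (E - M3 E) (E - M3 E) = (\<Sum>i<d1. \<Sum>j<d2. \<Sum>k<d3. (E i j k - (\<Sum>k'<d3. proj U3 r3 k k' * E i j k'))^2)"
      unfolding ip3_def M3_def mo3_def by (intro sum.cong refl) (simp add: power2_eq_square)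
    also have "\<dots> = (\<Sum>k<d3. \<Sum>i<d1. \<Sum>j<d2. (E i j k - (\<Sum>k'<d3. proj U3 r3 k k' * E i j k'))^2)"
      by (rule swap_in2[symmetric])
    finally show ?thesis unfolding e3 u3 .
  qed
  define G where "G = (\<lambda>a b c. \<Sum>p'<d1. \<Sum>q'<d2. \<Sum>k'<d3. E p' q' k' * U1 p' a * U2 q' b * U3 k' c)"
  have fr: "frob3 d1 d2 d3 (\<lambda>p q k. tucker r1 r2 r3 G U1 U2 U3 p q k - E p q k)
     = sqrt (ip3 d1 d2 d3 (E - M1 (M2 (M3 E))) (E - M1 (M2 (M3 E))))"
    unfolding frob3_def ip3_def
  proof (intro arg_cong[where f = sqrt] sum.cong refl)
    fix p q k assume "p \<in> {..<d1}" "q \<in> {..<d2}" "k \<in> {..<d3}"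
    then have p: "p < d1" and q: "q < d2" and k: "k < d3" by auto
    have "tucker r1 r2 r3 G U1 U2 U3 p q k = M1 (M2 (M3 E)) p q k"
      unfolding M1_def M2_def M3_def by (rule tucker_eq[OF p q k G_def])
    then show "(tucker r1 r2 r3 G U1 U2 U3 p q k - E p q k)\<^sup>2 = (E - M1 (M2 (M3 E))) p q k * (E - M1 (M2 (M3 E))) p q k"
      by (simp add: power2_eq_square algebra_simps)
  qed
  have "frob3 d1 d2 d3 (\<lambda>p q k. tucker r1 r2 r3 G U1 U2 U3 p q k - E p q k)
    \<le> sqrt ((\<Sum>t = Suc r1..d1. (sigma t (unfold1 d1 d2 d3 E))\<^sup>2)
          + (\<Sum>t = Suc r2..d2. (sigma t (unfold2 d1 d2 d3 E))\<^sup>2)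
          + (\<Sum>t = Suc r3..d3. (sigma t (unfold3 d1 d2 d3 E))\<^sup>2))"
    unfolding fr using hos i1 i2 i3 by simp
  then show ?thesis by blast
qed

lemma cs2:
  fixes u w :: "nat \<Rightarrow> nat \<Rightarrow> real"
  shows "(\<Sum>p<a. \<Sum>k<c. u p k * w p k)^2 \<le> (\<Sum>p<a. \<Sum>k<c. (u p k)^2) * (\<Sum>p<a. \<Sum>k<c. (w p k)^2)"
proof -
  have e: "(\<Sum>p<a. \<Sum>k<c. f p k) = (\<Sum>x\<in>{..<a} \<times> {..<c}. f (fst x) (snd x))" for f :: "nat \<Rightarrow> nat \<Rightarrow> real"
    by (simp add: sum.cartesian_product')
  show ?thesis unfolding e by (rule Cauchy_Schwarz_ineq_sum)
qed

lemma sqrt_mult_le: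
  assumes "0 \<le> S" "0 \<le> K" "T \<le> S * K"
  shows "sqrt T \<le> sqrt S * sqrt K"
  using assms by (metis real_sqrt_le_mono real_sqrt_mult)

lemma layer_diff_tensor:
  fixes b :: "nat \<Rightarrow> real \<Rightarrow> real"
  assumes bnd: "\<And>k y. k < nd \<Longrightarrow> \<bar>b k y\<bar> \<le> B" and B: "0 \<le> B"
  shows "vnorm2 m (\<lambda>q. kan_layer b nd nl A z q - kan_layer b nd nl A' z q)
    \<le> frob3 nl m nd (\<lambda>p q k. A p q k - A' p q k) * (B * sqrt (real nl * real nd))"
proof -
  define D where "D p q k = A p q k - A' p q k" for p q k
  define K where "K = B^2 * (real nl * real nd)"
  have dq: "kan_layer b nd nl A z q - kan_layer b nd nl A' z q = (\<Sum>p<nl. \<Sum>k<nd. D p q k * b k (z p))" for q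
    unfolding kan_layer_def D_def by (simp add: sum_subtractf algebra_simps)
  have bb: "(\<Sum>p<nl. \<Sum>k<nd. (b k (z p))^2) \<le> K"
  proof -
    have "(\<Sum>p<nl. \<Sum>k<nd. (b k (z p))^2) \<le> (\<Sum>p<nl. \<Sum>k<nd. B^2)"
    proof (intro sum_mono)
      fix p k assume "k \<in> {..<nd}"
      then have "\<bar>b k (z p)\<bar> \<le> B" using bnd by auto
      then show "(b k (z p))^2 \<le> B^2" by (metis abs_ge_zero power2_abs power_mono)
    qed
    then show ?thesis unfolding K_def by (simp add: mult_ac)
  qed
  have sq: "(kan_layer b nd nl A z q - kan_layer b nd nl A' z q)^2 \<le> (\<Sum>p<nl. \<Sum>k<nd. (D p q k)^2) * K" for q
  proof -
    have "(kan_layer b nd nl A z q - kan_layer b nd nl A' z q)^2 \<le> (\<Sum>p<nl. \<Sum>k<nd. (D p q k)^2) * (\<Sum>p<nl. \<Sum>k<nd. (b k (z p))^2)"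
      unfolding dq by (rule cs2)
    also have "\<dots> \<le> (\<Sum>p<nl. \<Sum>k<nd. (D p q k)^2) * K"
      by (rule mult_left_mono[OF bb], auto intro!: sum_nonneg)
    finally show ?thesis .
  qed
  have "(\<Sum>q<m. (kan_layer b nd nl A z q - kan_layer b nd nl A' z q)^2) \<le> (\<Sum>q<m. (\<Sum>p<nl. \<Sum>k<nd. (D p q k)^2) * K)"
    by (rule sum_mono, rule sq)
  also have "\<dots> = (\<Sum>q<m. \<Sum>p<nl. \<Sum>k<nd. (D p q k)^2) * K" by (simp add: sum_distrib_right)
  also have "(\<Sum>q<m. \<Sum>p<nl. \<Sum>k<nd. (D p q k)^2) = (\<Sum>p<nl. \<Sum>q<m. \<Sum>k<nd. (D p q k)^2)" by (rule sum.swap)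
  finally have le: "(\<Sum>q<m. (kan_layer b nd nl A z q - kan_layer b nd nl A' z q)^2) \<le> (\<Sum>p<nl. \<Sum>q<m. \<Sum>k<nd. (D p q k)^2) * K" .
  have "vnorm2 m (\<lambda>q. kan_layer b nd nl A z q - kan_layer b nd nl A' z q) \<le> sqrt (\<Sum>p<nl. \<Sum>q<m. \<Sum>k<nd. (D p q k)^2) * sqrt K"
    unfolding vnorm2_def by (rule sqrt_mult_le[OF _ _ le], auto intro!: sum_nonneg simp: K_def)
  also have "sqrt K = B * sqrt (real nl * real nd)" unfolding K_def using B by (simp add: real_sqrt_mult)
  finally show ?thesis unfolding frob3_def D_def .
qed

lemma layer_lip:
  fixes b :: "nat \<Rightarrow> real \<Rightarrow> real"
  assumes lip: "\<And>k u v. k < nd \<Longrightarrow> \<bar>b k u - b k v\<bar> \<le> Lb * \<bar>u - v\<bar>" and Lb: "0 \<le> Lb"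
  shows "vnorm2 m (\<lambda>q. kan_layer b nd nl A z q - kan_layer b nd nl A z' q)
    \<le> frob3 nl m nd A * (Lb * sqrt (real nd)) * vnorm2 nl (\<lambda>p. z p - z' p)"
proof -
  define K where "K = Lb^2 * real nd * (\<Sum>p<nl. (z p - z' p)^2)"
  have dq: "kan_layer b nd nl A z q - kan_layer b nd nl A z' q = (\<Sum>p<nl. \<Sum>k<nd. A p q k * (b k (z p) - b k (z' p)))" for q
    unfolding kan_layer_def by (simp add: sum_subtractf algebra_simps)
  have bb: "(\<Sum>p<nl. \<Sum>k<nd. (b k (z p) - b k (z' p))^2) \<le> K"
  proof -
    have "(\<Sum>p<nl. \<Sum>k<nd. (b k (z p) - b k (z' p))^2) \<le> (\<Sum>p<nl. \<Sum>k<nd. Lb^2 * (z p - z' p)^2)"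
    proof (intro sum_mono)
      fix p k assume "k \<in> {..<nd}"
      then have "\<bar>b k (z p) - b k (z' p)\<bar> \<le> Lb * \<bar>z p - z' p\<bar>" using lip by auto
      then have "\<bar>b k (z p) - b k (z' p)\<bar>^2 \<le> (Lb * \<bar>z p - z' p\<bar>)^2" by (rule power_mono) simp
      then show "(b k (z p) - b k (z' p))^2 \<le> Lb^2 * (z p - z' p)^2" by (simp add: power_mult_distrib)
    qed
    then show ?thesis unfolding K_def by (simp add: sum_distrib_left mult_ac)
  qed
  have sq: "(kan_layer b nd nl A z q - kan_layer b nd nl A z' q)^2 \<le> (\<Sum>p<nl. \<Sum>k<nd. (A p q k)^2) * K" for q
  proof -
    have "(kan_layer b nd nl A z q - kan_layer b nd nl A z' q)^2 \<le> (\<Sum>p<nl. \<Sum>k<nd. (A p q k)^2) * (\<Sum>p<nl. \<Sum>k<nd. (b k (z p) - b k (z' p))^2)"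
      unfolding dq by (rule cs2)
    also have "\<dots> \<le> (\<Sum>p<nl. \<Sum>k<nd. (A p q k)^2) * K"
      by (rule mult_left_mono[OF bb], auto intro!: sum_nonneg)
    finally show ?thesis .
  qed
  have "(\<Sum>q<m. (kan_layer b nd nl A z q - kan_layer b nd nl A z' q)^2) \<le> (\<Sum>q<m. (\<Sum>p<nl. \<Sum>k<nd. (A p q k)^2) * K)"
    by (rule sum_mono, rule sq)
  also have "\<dots> = (\<Sum>q<m. \<Sum>p<nl. \<Sum>k<nd. (A p q k)^2) * K" by (simp add: sum_distrib_right)
  also have "(\<Sum>q<m. \<Sum>p<nl. \<Sum>k<nd. (A p q k)^2) = (\<Sum>p<nl. \<Sum>q<m. \<Sum>k<nd. (A p q k)^2)" by (rule sum.swap)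
  finally have le: "(\<Sum>q<m. (kan_layer b nd nl A z q - kan_layer b nd nl A z' q)^2) \<le> (\<Sum>p<nl. \<Sum>q<m. \<Sum>k<nd. (A p q k)^2) * K" .
  have "vnorm2 m (\<lambda>q. kan_layer b nd nl A z q - kan_layer b nd nl A z' q) \<le> sqrt (\<Sum>p<nl. \<Sum>q<m. \<Sum>k<nd. (A p q k)^2) * sqrt K"
    unfolding vnorm2_def by (rule sqrt_mult_le[OF _ _ le], auto intro!: sum_nonneg mult_nonneg_nonneg simp: K_def)
  also have "sqrt K = Lb * sqrt (real nd) * vnorm2 nl (\<lambda>p. z p - z' p)"
    unfolding K_def vnorm2_def using Lb by (simp add: real_sqrt_mult)
  finally show ?thesis unfolding frob3_def by (simp add: mult_ac)
qed

lemma kan_z_cong: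
  assumes "\<And>l. 1 \<le> l \<Longrightarrow> l \<le> j \<Longrightarrow> A l = A' l"
  shows "kan_z b nd n A x j = kan_z b nd n A' x j"
  using assms by (induct j) auto

lemma vnorm2_triangle: "vnorm2 m (\<lambda>i. f i + g i) \<le> vnorm2 m f + vnorm2 m g"
  unfolding vnorm2_def using L2_set_triangle_ineq[of f g "{..<m}"] by (simp add: L2_set_def)

lemma vnorm2_nonneg: "vnorm2 m f \<ge> 0"
  unfolding vnorm2_def by (auto intro: sum_nonneg)

lemma kan_step_bound:
  fixes Aft Atg :: "nat \<Rightarrow> nat \<Rightarrow> nat \<Rightarrow> nat \<Rightarrow> real" and b :: "nat \<Rightarrow> real \<Rightarrow> real"
  assumes bnd: "\<And>k y. k < nd \<Longrightarrow> \<bar>b k y\<bar> \<le> B" and B: "0 \<le> B"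
    and lipb: "\<And>k u v. k < nd \<Longrightarrow> \<bar>b k u - b k v\<bar> \<le> Lb * \<bar>u - v\<bar>" and Lb: "0 \<le> Lb"
    and tg: "\<And>l. l \<in> {1..L} \<Longrightarrow> frob3 (n l) (n (Suc l)) nd (Atg l) \<le> M"
    and j: "1 \<le> j" and jm: "j \<le> m" and mL: "m \<le> L"
  shows "vnorm2 (n (Suc m)) (\<lambda>q. kan_z b nd n (\<lambda>l. if l \<le> j then Aft l else Atg l) x m q
            - kan_z b nd n (\<lambda>l. if l \<le> j - 1 then Aft l else Atg l) x m q)
     \<le> (M * Lb * sqrt (real nd)) ^ (m - j) * (B * sqrt (real (n j) * real nd))
        * frob3 (n j) (n (Suc j)) nd (\<lambda>p q k. Aft j p q k - Atg j p q k)"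
  using jm mL
proof (induct m)
  case 0
  then show ?case using j by simp
next
  case (Suc m)
  let ?H1 = "\<lambda>l. if l \<le> j then Aft l else Atg l"
  let ?H0 = "\<lambda>l. if l \<le> j - 1 then Aft l else Atg l"
  show ?case
  proof (cases "Suc m = j")
    case True
    then have jj: "j = Suc m" by simp
    have eqz: "kan_z b nd n (\<lambda>l. if l \<le> Suc m then Aft l else Atg l) x m
        = kan_z b nd n (\<lambda>l. if l \<le> m then Aft l else Atg l) x m"
      by (rule kan_z_cong) auto
    have "vnorm2 (n (Suc (Suc m))) (\<lambda>q. kan_layer b nd (n (Suc m)) (Aft (Suc m)) (kan_z b nd n (\<lambda>l. if l \<le> m then Aft l else Atg l) x m) q
            - kan_layer b nd (n (Suc m)) (Atg (Suc m)) (kan_z b nd n (\<lambda>l. if l \<le> m then Aft l else Atg l) x m) q)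
       \<le> frob3 (n (Suc m)) (n (Suc (Suc m))) nd (\<lambda>p q k. Aft (Suc m) p q k - Atg (Suc m) p q k) * (B * sqrt (real (n (Suc m)) * real nd))"
      by (rule layer_diff_tensor[OF bnd B])
    then show ?thesis unfolding jj using eqz by (simp add: mult_ac)
  next
    case False
    with Suc.prems have jm': "j \<le> m" and mL': "m \<le> L" by auto
    have IH: "vnorm2 (n (Suc m)) (\<lambda>q. kan_z b nd n ?H1 x m q - kan_z b nd n ?H0 x m q)
     \<le> (M * Lb * sqrt (real nd)) ^ (m - j) * (B * sqrt (real (n j) * real nd))
        * frob3 (n j) (n (Suc j)) nd (\<lambda>p q k. Aft j p q k - Atg j p q k)"
      by (rule Suc.hyps[OF jm' mL'])
    have h1: "?H1 (Suc m) = Atg (Suc m)" using jm' by simp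
    have h0: "?H0 (Suc m) = Atg (Suc m)" using jm' j by auto
    have fM: "frob3 (n (Suc m)) (n (Suc (Suc m))) nd (Atg (Suc m)) \<le> M"
      by (rule tg) (use Suc.prems in auto)
    have f0: "0 \<le> frob3 (n (Suc m)) (n (Suc (Suc m))) nd (Atg (Suc m))"
      unfolding frob3_def by (auto intro!: sum_nonneg)
    define D where "D = vnorm2 (n (Suc m)) (\<lambda>q. kan_z b nd n ?H1 x m q - kan_z b nd n ?H0 x m q)"
    have D0: "0 \<le> D" unfolding D_def by (rule vnorm2_nonneg)
    have "vnorm2 (n (Suc (Suc m))) (\<lambda>q. kan_z b nd n ?H1 x (Suc m) q - kan_z b nd n ?H0 x (Suc m) q)
      = vnorm2 (n (Suc (Suc m))) (\<lambda>q. kan_layer b nd (n (Suc m)) (Atg (Suc m)) (kan_z b nd n ?H1 x m) q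
            - kan_layer b nd (n (Suc m)) (Atg (Suc m)) (kan_z b nd n ?H0 x m) q)"
      using h1 h0 by simp
    also have "\<dots> \<le> frob3 (n (Suc m)) (n (Suc (Suc m))) nd (Atg (Suc m)) * (Lb * sqrt (real nd)) * D"
      unfolding D_def by (rule layer_lip[OF lipb Lb])
    also have "\<dots> \<le> M * (Lb * sqrt (real nd)) * D"
      by (intro mult_right_mono fM D0) (use Lb in simp)
    also have "\<dots> \<le> M * (Lb * sqrt (real nd)) * ((M * Lb * sqrt (real nd)) ^ (m - j) * (B * sqrt (real (n j) * real nd))
        * frob3 (n j) (n (Suc j)) nd (\<lambda>p q k. Aft j p q k - Atg j p q k))"
      by (rule mult_left_mono[OF IH[folded D_def]]) (use fM f0 Lb in simp)
    also have "\<dots> = (M * Lb * sqrt (real nd)) ^ (Suc m - j) * (B * sqrt (real (n j) * real nd))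
        * frob3 (n j) (n (Suc j)) nd (\<lambda>p q k. Aft j p q k - Atg j p q k)"
      using jm' by (simp add: Suc_diff_le mult_ac)
    finally show ?thesis .
  qed
qed

lemma kan_telescope:
  fixes Aft Atg :: "nat \<Rightarrow> nat \<Rightarrow> nat \<Rightarrow> nat \<Rightarrow> real" and b :: "nat \<Rightarrow> real \<Rightarrow> real"
  assumes bnd: "\<And>k y. k < nd \<Longrightarrow> \<bar>b k y\<bar> \<le> B" and B: "0 \<le> B"
    and lipb: "\<And>k u v. k < nd \<Longrightarrow> \<bar>b k u - b k v\<bar> \<le> Lb * \<bar>u - v\<bar>" and Lb: "0 \<le> Lb"
    and tg: "\<And>l. l \<in> {1..L} \<Longrightarrow> frob3 (n l) (n (Suc l)) nd (Atg l) \<le> M"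
  shows "vnorm2 (n (Suc L)) (\<lambda>q. kan L b nd n Aft x q - kan L b nd n Atg x q)
    \<le> (\<Sum>l = 1..L. (M * Lb * sqrt (real nd)) ^ (L - l) * (B * sqrt (real (n l) * real nd))
        * frob3 (n l) (n (Suc l)) nd (\<lambda>p q k. Aft l p q k - Atg l p q k))"
proof -
  define out where "out J = kan_z b nd n (\<lambda>l. if l \<le> J then Aft l else Atg l) x L" for J
  define c where "c l = (M * Lb * sqrt (real nd)) ^ (L - l) * (B * sqrt (real (n l) * real nd))
        * frob3 (n l) (n (Suc l)) nd (\<lambda>p q k. Aft l p q k - Atg l p q k)" for l
  have tel: "J \<le> L \<Longrightarrow> vnorm2 (n (Suc L)) (\<lambda>q. out J q - out 0 q) \<le> (\<Sum>l = 1..J. c l)" for J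
  proof (induct J)
    case 0
    then show ?case unfolding vnorm2_def by simp
  next
    case (Suc J)
    have step: "vnorm2 (n (Suc L)) (\<lambda>q. out (Suc J) q - out J q) \<le> c (Suc J)"
      unfolding out_def c_def using kan_step_bound[where b=b and nd=nd and B=B and Lb=Lb and L=L and n=n and Atg=Atg and M=M
          and Aft=Aft and x=x and j="Suc J" and m=L, OF bnd B lipb Lb tg] Suc.prems
      by simp
    have "vnorm2 (n (Suc L)) (\<lambda>q. out (Suc J) q - out 0 q)
       = vnorm2 (n (Suc L)) (\<lambda>q. (out (Suc J) q - out J q) + (out J q - out 0 q))" by simp
    also have "\<dots> \<le> vnorm2 (n (Suc L)) (\<lambda>q. out (Suc J) q - out J q) + vnorm2 (n (Suc L)) (\<lambda>q. out J q - out 0 q)"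
      by (rule vnorm2_triangle)
    also have "\<dots> \<le> c (Suc J) + (\<Sum>l = 1..J. c l)" using step Suc by simp
    also have "\<dots> = (\<Sum>l = 1..Suc J. c l)" by simp
    finally show ?case .
  qed
  have oL: "out L = kan L b nd n Aft x" unfolding out_def kan_def by (rule kan_z_cong) auto
  have o0: "out 0 = kan L b nd n Atg x" unfolding out_def kan_def by (rule kan_z_cong) auto
  show ?thesis using tel[of L] unfolding oL o0 c_def by simp
qed

theorem theorem1:
  fixes L nd :: nat and n :: "nat \<Rightarrow> nat" and b :: "nat \<Rightarrow> real \<Rightarrow> real"
    and Apt Atg :: "nat \<Rightarrow> nat \<Rightarrow> nat \<Rightarrow> nat \<Rightarrow> real"
    and B M Lb :: real and r1 r2 r3 :: "nat \<Rightarrow> nat"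
  assumes smooth: "\<And>k. k < nd \<Longrightarrow> smooth_fun (b k)"
    and bounded: "\<And>k z. k < nd \<Longrightarrow> \<bar>b k z\<bar> \<le> B"
    and lip: "\<And>k. k < nd \<Longrightarrow> Lb-lipschitz_on UNIV (b k)"
    and Lb_pos: "Lb > 0" and B_pos: "B > 0" and M_pos: "M > 0"
    and tg_bd: "\<And>l. l \<in> {1..L} \<Longrightarrow> frob3 (n l) (n (Suc l)) nd (Atg l) \<le> M"
    and pt_bd: "\<And>l. l \<in> {1..L} \<Longrightarrow> frob3 (n l) (n (Suc l)) nd (Apt l) \<le> M"
    and r1: "\<And>l. l \<in> {1..L} \<Longrightarrow> 1 \<le> r1 l \<and> r1 l \<le> n l"
    and r2: "\<And>l. l \<in> {1..L} \<Longrightarrow> 1 \<le> r2 l \<and> r2 l \<le> n (Suc l)"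
    and r3: "\<And>l. l \<in> {1..L} \<Longrightarrow> 1 \<le> r3 l \<and> r3 l \<le> nd"
  shows "\<exists>(G :: nat \<Rightarrow> nat \<Rightarrow> nat \<Rightarrow> nat \<Rightarrow> real) (U1 :: nat \<Rightarrow> nat \<Rightarrow> nat \<Rightarrow> real)
           (U2 :: nat \<Rightarrow> nat \<Rightarrow> nat \<Rightarrow> real) (U3 :: nat \<Rightarrow> nat \<Rightarrow> nat \<Rightarrow> real).
    (\<forall>x :: nat \<Rightarrow> real.
      vnorm2 (n (Suc L))
        (\<lambda>q. kan L b nd n
               (\<lambda>l p q k. Apt l p q k + tucker (r1 l) (r2 l) (r3 l) (G l) (U1 l) (U2 l) (U3 l) p q k) x q
             - kan L b nd n Atg x q)
      \<le> (\<Sum>l = 1..L.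
          (M * Lb * sqrt (real nd)) ^ (L - l) * (B * sqrt (real (n l) * real nd)) *
          sqrt ((\<Sum>r = Suc (r1 l)..n l.
                   (sigma r (unfold1 (n l) (n (Suc l)) nd (\<lambda>p q k. Atg l p q k - Apt l p q k)))\<^sup>2)
              + (\<Sum>r = Suc (r2 l)..n (Suc l).
                   (sigma r (unfold2 (n l) (n (Suc l)) nd (\<lambda>p q k. Atg l p q k - Apt l p q k)))\<^sup>2)
              + (\<Sum>r = Suc (r3 l)..nd.
                   (sigma r (unfold3 (n l) (n (Suc l)) nd (\<lambda>p q k. Atg l p q k - Apt l p q k)))\<^sup>2))))"
proof -
  have B0: "0 \<le> B" using B_pos by simp
  have Lb0: "0 \<le> Lb" using Lb_pos by simp
  have lipb: "\<bar>b k u - b k v\<bar> \<le> Lb * \<bar>u - v\<bar>" if k: "k < nd" for k u v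
  proof -
    have "dist (b k u) (b k v) \<le> Lb * dist u v"
      by (rule lipschitz_onD[OF lip[OF k]]) auto
    then show ?thesis by (simp add: dist_real_def)
  qed
  have ex: "\<forall>l. \<exists>g. l \<in> {1..L} \<longrightarrow>
     frob3 (n l) (n (Suc l)) nd (\<lambda>p q k. tucker (r1 l) (r2 l) (r3 l) (fst g) (fst (snd g)) (fst (snd (snd g))) (snd (snd (snd g))) p q k
        - (Atg l p q k - Apt l p q k))
     \<le> sqrt ((\<Sum>r = Suc (r1 l)..n l.
                   (sigma r (unfold1 (n l) (n (Suc l)) nd (\<lambda>p q k. Atg l p q k - Apt l p q k)))\<^sup>2)
              + (\<Sum>r = Suc (r2 l)..n (Suc l).
                   (sigma r (unfold2 (n l) (n (Suc l)) nd (\<lambda>p q k. Atg l p q k - Apt l p q k)))\<^sup>2)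
              + (\<Sum>r = Suc (r3 l)..nd.
                   (sigma r (unfold3 (n l) (n (Suc l)) nd (\<lambda>p q k. Atg l p q k - Apt l p q k)))\<^sup>2))"
  proof
    fix l
    show "\<exists>g. l \<in> {1..L} \<longrightarrow>
     frob3 (n l) (n (Suc l)) nd (\<lambda>p q k. tucker (r1 l) (r2 l) (r3 l) (fst g) (fst (snd g)) (fst (snd (snd g))) (snd (snd (snd g))) p q k
        - (Atg l p q k - Apt l p q k))
     \<le> sqrt ((\<Sum>r = Suc (r1 l)..n l.
                   (sigma r (unfold1 (n l) (n (Suc l)) nd (\<lambda>p q k. Atg l p q k - Apt l p q k)))\<^sup>2)
              + (\<Sum>r = Suc (r2 l)..n (Suc l).
                   (sigma r (unfold2 (n l) (n (Suc l)) nd (\<lambda>p q k. Atg l p q k - Apt l p q k)))\<^sup>2)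
              + (\<Sum>r = Suc (r3 l)..nd.
                   (sigma r (unfold3 (n l) (n (Suc l)) nd (\<lambda>p q k. Atg l p q k - Apt l p q k)))\<^sup>2))"
    proof (cases "l \<in> {1..L}")
      case True
      have a1: "r1 l \<le> n l" using r1[OF True] by simp
      have a2: "r2 l \<le> n (Suc l)" using r2[OF True] by simp
      have a3: "r3 l \<le> nd" using r3[OF True] by simp
      from layer_bound[OF a1 a2 a3, where E = "\<lambda>p q k. Atg l p q k - Apt l p q k"]
      obtain G0 V1 V2 V3 where
        "frob3 (n l) (n (Suc l)) nd (\<lambda>p q k. tucker (r1 l) (r2 l) (r3 l) G0 V1 V2 V3 p q k - (Atg l p q k - Apt l p q k))
     \<le> sqrt ((\<Sum>r = Suc (r1 l)..n l.
                   (sigma r (unfold1 (n l) (n (Suc l)) nd (\<lambda>p q k. Atg l p q k - Apt l p q k)))\<^sup>2)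
              + (\<Sum>r = Suc (r2 l)..n (Suc l).
                   (sigma r (unfold2 (n l) (n (Suc l)) nd (\<lambda>p q k. Atg l p q k - Apt l p q k)))\<^sup>2)
              + (\<Sum>r = Suc (r3 l)..nd.
                   (sigma r (unfold3 (n l) (n (Suc l)) nd (\<lambda>p q k. Atg l p q k - Apt l p q k)))\<^sup>2))"
        by blast
      then show ?thesis by (intro exI[of _ "(G0, V1, V2, V3)"]) simp
    next
      case False
      then show ?thesis by blast
    qed
  qed
  from choice[OF ex] obtain g where g: "\<And>l. l \<in> {1..L} \<Longrightarrow>
     frob3 (n l) (n (Suc l)) nd (\<lambda>p q k. tucker (r1 l) (r2 l) (r3 l) (fst (g l)) (fst (snd (g l))) (fst (snd (snd (g l)))) (snd (snd (snd (g l)))) p q k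
        - (Atg l p q k - Apt l p q k))
     \<le> sqrt ((\<Sum>r = Suc (r1 l)..n l.
                   (sigma r (unfold1 (n l) (n (Suc l)) nd (\<lambda>p q k. Atg l p q k - Apt l p q k)))\<^sup>2)
              + (\<Sum>r = Suc (r2 l)..n (Suc l).
                   (sigma r (unfold2 (n l) (n (Suc l)) nd (\<lambda>p q k. Atg l p q k - Apt l p q k)))\<^sup>2)
              + (\<Sum>r = Suc (r3 l)..nd.
                   (sigma r (unfold3 (n l) (n (Suc l)) nd (\<lambda>p q k. Atg l p q k - Apt l p q k)))\<^sup>2))"
    by blast
  define G where "G l = fst (g l)" for l
  define U1 where "U1 l = fst (snd (g l))" for l
  define U2 where "U2 l = fst (snd (snd (g l)))" for l
  define U3 where "U3 l = snd (snd (snd (g l)))" for l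
  define Aft where "Aft = (\<lambda>l p q k. Apt l p q k + tucker (r1 l) (r2 l) (r3 l) (G l) (U1 l) (U2 l) (U3 l) p q k)"
  define C where "C l = (M * Lb * sqrt (real nd)) ^ (L - l) * (B * sqrt (real (n l) * real nd))" for l
  have C0: "0 \<le> C l" for l unfolding C_def using B0 Lb0 M_pos by simp
  have fe: "frob3 (n l) (n (Suc l)) nd (\<lambda>p q k. Aft l p q k - Atg l p q k)
     \<le> sqrt ((\<Sum>r = Suc (r1 l)..n l.
                   (sigma r (unfold1 (n l) (n (Suc l)) nd (\<lambda>p q k. Atg l p q k - Apt l p q k)))\<^sup>2)
              + (\<Sum>r = Suc (r2 l)..n (Suc l).
                   (sigma r (unfold2 (n l) (n (Suc l)) nd (\<lambda>p q k. Atg l p q k - Apt l p q k)))\<^sup>2)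
              + (\<Sum>r = Suc (r3 l)..nd.
                   (sigma r (unfold3 (n l) (n (Suc l)) nd (\<lambda>p q k. Atg l p q k - Apt l p q k)))\<^sup>2))"
    if l: "l \<in> {1..L}" for l
  proof -
    have "(\<lambda>p q k. Aft l p q k - Atg l p q k) = (\<lambda>p q k. tucker (r1 l) (r2 l) (r3 l) (fst (g l)) (fst (snd (g l))) (fst (snd (snd (g l)))) (snd (snd (snd (g l)))) p q k
        - (Atg l p q k - Apt l p q k))"
      unfolding Aft_def G_def U1_def U2_def U3_def by (intro ext) simp
    then show ?thesis using g[OF l] by simp
  qed
  have main: "vnorm2 (n (Suc L)) (\<lambda>q. kan L b nd n Aft x q - kan L b nd n Atg x q)
    \<le> (\<Sum>l = 1..L. C l * frob3 (n l) (n (Suc l)) nd (\<lambda>p q k. Aft l p q k - Atg l p q k))"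
    for x
    using kan_telescope[where b=b and nd=nd and B=B and Lb=Lb and L=L and n=n and Atg=Atg and M=M
          and Aft=Aft and x=x, OF bounded B0 lipb Lb0 tg_bd] unfolding C_def by simp
  have "\<forall>x :: nat \<Rightarrow> real.
      vnorm2 (n (Suc L)) (\<lambda>q. kan L b nd n Aft x q - kan L b nd n Atg x q)
      \<le> (\<Sum>l = 1..L.
          (M * Lb * sqrt (real nd)) ^ (L - l) * (B * sqrt (real (n l) * real nd)) *
          sqrt ((\<Sum>r = Suc (r1 l)..n l.
                   (sigma r (unfold1 (n l) (n (Suc l)) nd (\<lambda>p q k. Atg l p q k - Apt l p q k)))\<^sup>2)
              + (\<Sum>r = Suc (r2 l)..n (Suc l).
                   (sigma r (unfold2 (n l) (n (Suc l)) nd (\<lambda>p q k. Atg l p q k - Apt l p q k)))\<^sup>2)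
              + (\<Sum>r = Suc (r3 l)..nd.
                   (sigma r (unfold3 (n l) (n (Suc l)) nd (\<lambda>p q k. Atg l p q k - Apt l p q k)))\<^sup>2)))"
  proof
    fix x :: "nat \<Rightarrow> real"
    have "(\<Sum>l = 1..L. C l * frob3 (n l) (n (Suc l)) nd (\<lambda>p q k. Aft l p q k - Atg l p q k))
      \<le> (\<Sum>l = 1..L. C l *
          sqrt ((\<Sum>r = Suc (r1 l)..n l.
                   (sigma r (unfold1 (n l) (n (Suc l)) nd (\<lambda>p q k. Atg l p q k - Apt l p q k)))\<^sup>2)
              + (\<Sum>r = Suc (r2 l)..n (Suc l).
                   (sigma r (unfold2 (n l) (n (Suc l)) nd (\<lambda>p q k. Atg l p q k - Apt l p q k)))\<^sup>2)
              + (\<Sum>r = Suc (r3 l)..nd.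
                   (sigma r (unfold3 (n l) (n (Suc l)) nd (\<lambda>p q k. Atg l p q k - Apt l p q k)))\<^sup>2)))"
      by (rule sum_mono, rule mult_left_mono[OF fe C0])
    with main[of x] show "vnorm2 (n (Suc L)) (\<lambda>q. kan L b nd n Aft x q - kan L b nd n Atg x q)
      \<le> (\<Sum>l = 1..L.
          (M * Lb * sqrt (real nd)) ^ (L - l) * (B * sqrt (real (n l) * real nd)) *
          sqrt ((\<Sum>r = Suc (r1 l)..n l.
                   (sigma r (unfold1 (n l) (n (Suc l)) nd (\<lambda>p q k. Atg l p q k - Apt l p q k)))\<^sup>2)
              + (\<Sum>r = Suc (r2 l)..n (Suc l).
                   (sigma r (unfold2 (n l) (n (Suc l)) nd (\<lambda>p q k. Atg l p q k - Apt l p q k)))\<^sup>2)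
              + (\<Sum>r = Suc (r3 l)..nd.
                   (sigma r (unfold3 (n l) (n (Suc l)) nd (\<lambda>p q k. Atg l p q k - Apt l p q k)))\<^sup>2)))"
      unfolding C_def by linarith
  qed
  then show ?thesis unfolding Aft_def by blast
qed

end
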